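(* Let $\mathcal T$ be an $m\times n$ PEPS with nonzero contraction, and let $\mathcal C$ be an $m\times n$ PEPS with the same contraction which is columnwise canonical towards the last column and whose last column is canonical towards node $(m,n)$, with all horizontal bond dimensions and all vertical bond dimensions in column $n$ of $\mathcal C$ at most $D$. Then, up to $O(\epsilon_1^2+\epsilon_2^2)$, $$\sup_{(\Xi,\xi)}\mathscr E_r(\mathcal C,\Xi,\xi)\le\frac{\epsilon_1\big(1+(n-1)D^{m/2}\big)+\epsilon_2\big(1+(m-1)\sqrt D\big)}{\epsilon_1(n-1)+\epsilon_2m}\,\sup_{(\Delta,\delta)}\mathscr E_r(\mathcal T,\Delta,\delta),$$ where the suprema run over $(\epsilon_1,\epsilon_2)$-perturbations of $\mathcal C$ and of $\mathcal T$ respectively.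
   Context: PEPS: an $m\times n$ PEPS is a tensor network on the $m\times n$ grid with node tensors $\mathbf T^{(i,j)}$ ($i$ = row, $j$ = column); each node has a physical (uncontracted) leg, horizontal bonds join $(i,j)$ and $(i,j+1)$, vertical bonds join $(i,j)$ and $(i+1,j)$; the contraction $\mathbf T$ sums over all bond indices the product of node entries. The column tensor $\mathbf T^{(\cdot,j)}$ is the contraction of the nodes of column $j$. Columnwise canonical towards the last column: for each $j\le n-1$, the matricization of the column tensor of column $j$ with rows indexed by its physical legs and its horizontal bonds to column $j-1$, and columns indexed by its horizontal bonds to column $j+1$, is an isometry. Last column canonical towards $(m,n)$: for each $i\le m-1$, the matricization of node $(i,n)$ with rows indexed by its physical leg, its horizontal bond to column $n-1$ and its vertical bond to node $(i-1,n)$ (if any), and columns indexed by its vertical bond to node $(i+1,n)$, is an isometry. Perturbation model: $(\Delta,\delta)$ consists of tensors $\Delta^{(j)}$ ($j\le n-1$) of the shape of $\mathbf T^{(\cdot,j)}$ and $\delta^{(i)}$ ($i\le m$) of the shape of $\mathbf T^{(i,n)}$; the perturbed PEPS has column tensors $\mathbf T^{(\cdot,j)}+\Delta^{(j)}$ for $j\le n-1$ and nodes $\mathbf T^{(i,n)}+\delta^{(i)}$ in column $n$; $\hat{\mathbf T}$ is its contraction and $\mathscr E_r(\mathcal T,\Delta,\delta)=\|\hat{\mathbf T}-\mathbf T\|_F/\|\mathbf T\|_F$. It is an $(\epsilon_1,\epsilon_2)$-perturbation if $\|\Delta^{(j)}\|_F\le\epsilon_1\|\mathbf T^{(\cdot,j)}\|_F$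 and $\|\delta^{(i)}\|_F\le\epsilon_2\|\mathbf T^{(i,n)}\|_F$ for all $j\le n-1$, $i\le m$. $\|\cdot\|_F$ Frobenius norm. *)

theory Defs
  imports Complex_Main "HOL-Library.FuncSet"
begin

text \<open>Conventions: rows i and columns j are 0-indexed (i < m, j < n).
Every node has five legs (p, l, r, u, d): physical, left/right horizontal,
up/down vertical.  A leg that does not exist (boundary) is represented by a
dummy leg of dimension 1 (index 0).  hdim T i j is the dimension of the
horizontal bond between (i,j) and (i,j+1); vdim T i j that of the vertical
bond between (i,j) and (i+1,j).\<close>

record peps =
  phys :: "nat \<Rightarrow> nat \<Rightarrow> nat"
  hdim :: "nat \<Rightarrow> nat \<Rightarrow> nat"
  vdim :: "nat \<Rightarrow> nat \<Rightarrow> nat"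
  node :: "nat \<Rightarrow> nat \<Rightarrow> nat \<Rightarrow> nat \<Rightarrow> nat \<Rightarrow> nat \<Rightarrow> nat \<Rightarrow> real"

definition ldim :: "peps \<Rightarrow> nat \<Rightarrow> nat \<Rightarrow> nat" where
  "ldim T i j = (if j = 0 then 1 else hdim T i (j - 1))"
definition rdim :: "nat \<Rightarrow> peps \<Rightarrow> nat \<Rightarrow> nat \<Rightarrow> nat" where
  "rdim n T i j = (if j + 1 < n then hdim T i j else 1)"
definition udim :: "peps \<Rightarrow> nat \<Rightarrow> nat \<Rightarrow> nat" where
  "udim T i j = (if i = 0 then 1 else vdim T (i - 1) j)"
definition ddim :: "nat \<Rightarrow> peps \<Rightarrow> nat \<Rightarrow> nat \<Rightarrow> nat" where
  "ddim m T i j = (if i + 1 < m then vdim T i j else 1)"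

definition nshape_norm :: "nat \<Rightarrow> nat \<Rightarrow> peps \<Rightarrow> nat \<Rightarrow> nat \<Rightarrow>
    (nat \<Rightarrow> nat \<Rightarrow> nat \<Rightarrow> nat \<Rightarrow> nat \<Rightarrow> real) \<Rightarrow> real" where
  "nshape_norm m n T i j t = sqrt (\<Sum>p<phys T i j. \<Sum>l<ldim T i j. \<Sum>r<rdim n T i j.
      \<Sum>u<udim T i j. \<Sum>d<ddim m T i j. (t p l r u d)\<^sup>2)"

text \<open>Column tensors: indexed by physical index vector, left-bond vector and
right-bond vector (functions on rows {..<m}).\<close>
definition cu :: "(nat \<Rightarrow> nat) \<Rightarrow> nat \<Rightarrow> nat" where
  "cu v i = (if i = 0 then 0 else v (i - 1))"
definition cd :: "nat \<Rightarrow> (nat \<Rightarrow> nat) \<Rightarrow> nat \<Rightarrow> nat" where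
  "cd m v i = (if i + 1 < m then v i else 0)"

definition vbonds_col :: "nat \<Rightarrow> peps \<Rightarrow> nat \<Rightarrow> (nat \<Rightarrow> nat) set" where
  "vbonds_col m T j = Pi\<^sub>E {..<m - 1} (\<lambda>i. {..<vdim T i j})"

definition col_tensor :: "nat \<Rightarrow> nat \<Rightarrow> peps \<Rightarrow> nat \<Rightarrow>
    (nat \<Rightarrow> nat) \<Rightarrow> (nat \<Rightarrow> nat) \<Rightarrow> (nat \<Rightarrow> nat) \<Rightarrow> real" where
  "col_tensor m n T j x l r = (\<Sum>v\<in>vbonds_col m T j.
      \<Prod>i<m. node T i j (x i) (l i) (r i) (cu v i) (cd m v i))"

definition physC :: "nat \<Rightarrow> peps \<Rightarrow> nat \<Rightarrow> (nat \<Rightarrow> nat) set" where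
  "physC m T j = Pi\<^sub>E {..<m} (\<lambda>i. {..<phys T i j})"
definition leftC :: "nat \<Rightarrow> peps \<Rightarrow> nat \<Rightarrow> (nat \<Rightarrow> nat) set" where
  "leftC m T j = Pi\<^sub>E {..<m} (\<lambda>i. {..<ldim T i j})"
definition rightC :: "nat \<Rightarrow> nat \<Rightarrow> peps \<Rightarrow> nat \<Rightarrow> (nat \<Rightarrow> nat) set" where
  "rightC m n T j = Pi\<^sub>E {..<m} (\<lambda>i. {..<rdim n T i j})"

definition cshape_norm :: "nat \<Rightarrow> nat \<Rightarrow> peps \<Rightarrow> nat \<Rightarrow>
    ((nat \<Rightarrow> nat) \<Rightarrow> (nat \<Rightarrow> nat) \<Rightarrow> (nat \<Rightarrow> nat) \<Rightarrow> real) \<Rightarrow> real" where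
  "cshape_norm m n T j t = sqrt (\<Sum>x\<in>physC m T j. \<Sum>l\<in>leftC m T j. \<Sum>r\<in>rightC m n T j.
      (t x l r)\<^sup>2)"

definition hbonds :: "nat \<Rightarrow> nat \<Rightarrow> peps \<Rightarrow> (nat \<times> nat \<Rightarrow> nat) set" where
  "hbonds m n T = Pi\<^sub>E {(i, j). i < m \<and> j + 1 < n} (\<lambda>(i, j). {..<hdim T i j})"
definition vbonds :: "nat \<Rightarrow> nat \<Rightarrow> peps \<Rightarrow> (nat \<times> nat \<Rightarrow> nat) set" where
  "vbonds m n T = Pi\<^sub>E {(i, j). i + 1 < m \<and> j < n} (\<lambda>(i, j). {..<vdim T i j})"

definition lidx :: "(nat \<times> nat \<Rightarrow> nat) \<Rightarrow> nat \<Rightarrow> nat \<Rightarrow> nat" where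
  "lidx h i j = (if j = 0 then 0 else h (i, j - 1))"
definition ridx :: "nat \<Rightarrow> (nat \<times> nat \<Rightarrow> nat) \<Rightarrow> nat \<Rightarrow> nat \<Rightarrow> nat" where
  "ridx n h i j = (if j + 1 < n then h (i, j) else 0)"
definition uidx :: "(nat \<times> nat \<Rightarrow> nat) \<Rightarrow> nat \<Rightarrow> nat \<Rightarrow> nat" where
  "uidx v i j = (if i = 0 then 0 else v (i - 1, j))"
definition didx :: "nat \<Rightarrow> (nat \<times> nat \<Rightarrow> nat) \<Rightarrow> nat \<Rightarrow> nat \<Rightarrow> nat" where
  "didx m v i j = (if i + 1 < m then v (i, j) else 0)"

definition contraction :: "nat \<Rightarrow> nat \<Rightarrow> peps \<Rightarrow> (nat \<times> nat \<Rightarrow> nat) \<Rightarrow> real" where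
  "contraction m n T x = (\<Sum>h\<in>hbonds m n T. \<Sum>v\<in>vbonds m n T.
      \<Prod>i<m. \<Prod>j<n. node T i j (x (i, j)) (lidx h i j) (ridx n h i j) (uidx v i j) (didx m v i j))"

definition physIdx :: "nat \<Rightarrow> nat \<Rightarrow> peps \<Rightarrow> (nat \<times> nat \<Rightarrow> nat) set" where
  "physIdx m n T = Pi\<^sub>E ({..<m} \<times> {..<n}) (\<lambda>(i, j). {..<phys T i j})"

definition tensor_norm :: "nat \<Rightarrow> nat \<Rightarrow> peps \<Rightarrow> ((nat \<times> nat \<Rightarrow> nat) \<Rightarrow> real) \<Rightarrow> real" where
  "tensor_norm m n T f = sqrt (\<Sum>x\<in>physIdx m n T. (f x)\<^sup>2)"

definition xcol :: "nat \<Rightarrow> (nat \<times> nat \<Rightarrow> nat) \<Rightarrow> nat \<Rightarrow> nat \<Rightarrow> nat" where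
  "xcol m x j = (\<lambda>i\<in>{..<m}. x (i, j))"
definition lcol :: "nat \<Rightarrow> (nat \<times> nat \<Rightarrow> nat) \<Rightarrow> nat \<Rightarrow> nat \<Rightarrow> nat" where
  "lcol m h j = (\<lambda>i\<in>{..<m}. lidx h i j)"
definition rcol :: "nat \<Rightarrow> nat \<Rightarrow> (nat \<times> nat \<Rightarrow> nat) \<Rightarrow> nat \<Rightarrow> nat \<Rightarrow> nat" where
  "rcol m n h j = (\<lambda>i\<in>{..<m}. ridx n h i j)"

definition last_col :: "nat \<Rightarrow> nat \<Rightarrow> peps \<Rightarrow>
    (nat \<Rightarrow> nat \<Rightarrow> nat \<Rightarrow> nat \<Rightarrow> nat \<Rightarrow> nat \<Rightarrow> real) \<Rightarrow> (nat \<Rightarrow> nat) \<Rightarrow> (nat \<Rightarrow> nat) \<Rightarrow> real" where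
  "last_col m n T \<delta> xc l = (\<Sum>v\<in>vbonds_col m T (n - 1).
      \<Prod>i<m. node T i (n - 1) (xc i) (l i) 0 (cu v i) (cd m v i)
             + \<delta> i (xc i) (l i) 0 (cu v i) (cd m v i))"

definition pert_contraction :: "nat \<Rightarrow> nat \<Rightarrow> peps \<Rightarrow>
    (nat \<Rightarrow> (nat \<Rightarrow> nat) \<Rightarrow> (nat \<Rightarrow> nat) \<Rightarrow> (nat \<Rightarrow> nat) \<Rightarrow> real) \<Rightarrow>
    (nat \<Rightarrow> nat \<Rightarrow> nat \<Rightarrow> nat \<Rightarrow> nat \<Rightarrow> nat \<Rightarrow> real) \<Rightarrow> (nat \<times> nat \<Rightarrow> nat) \<Rightarrow> real" where
  "pert_contraction m n T \<Delta> \<delta> x = (\<Sum>h\<in>hbonds m n T.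
      (\<Prod>j<n - 1. col_tensor m n T j (xcol m x j) (lcol m h j) (rcol m n h j)
                   + \<Delta> j (xcol m x j) (lcol m h j) (rcol m n h j))
      * last_col m n T \<delta> (xcol m x (n - 1)) (lcol m h (n - 1)))"

definition rel_err :: "nat \<Rightarrow> nat \<Rightarrow> peps \<Rightarrow>
    (nat \<Rightarrow> (nat \<Rightarrow> nat) \<Rightarrow> (nat \<Rightarrow> nat) \<Rightarrow> (nat \<Rightarrow> nat) \<Rightarrow> real) \<Rightarrow>
    (nat \<Rightarrow> nat \<Rightarrow> nat \<Rightarrow> nat \<Rightarrow> nat \<Rightarrow> nat \<Rightarrow> real) \<Rightarrow> real" where
  "rel_err m n T \<Delta> \<delta> =
     tensor_norm m n T (\<lambda>x. pert_contraction m n T \<Delta> \<delta> x - contraction m n T x)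
     / tensor_norm m n T (contraction m n T)"

definition is_pert :: "nat \<Rightarrow> nat \<Rightarrow> peps \<Rightarrow> real \<Rightarrow> real \<Rightarrow>
    (nat \<Rightarrow> (nat \<Rightarrow> nat) \<Rightarrow> (nat \<Rightarrow> nat) \<Rightarrow> (nat \<Rightarrow> nat) \<Rightarrow> real) \<Rightarrow>
    (nat \<Rightarrow> nat \<Rightarrow> nat \<Rightarrow> nat \<Rightarrow> nat \<Rightarrow> nat \<Rightarrow> real) \<Rightarrow> bool" where
  "is_pert m n T \<epsilon>1 \<epsilon>2 \<Delta> \<delta> \<longleftrightarrow>
     (\<forall>j<n - 1. cshape_norm m n T j (\<Delta> j) \<le> \<epsilon>1 * cshape_norm m n T j (col_tensor m n T j)) \<and>
     (\<forall>i<m. nshape_norm m n T i (n - 1) (\<delta> i) \<le> \<epsilon>2 * nshape_norm m n T i (n - 1) (node T i (n - 1)))"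

definition sup_err :: "nat \<Rightarrow> nat \<Rightarrow> peps \<Rightarrow> real \<Rightarrow> real \<Rightarrow> real" where
  "sup_err m n T \<epsilon>1 \<epsilon>2 = Sup {rel_err m n T \<Delta> \<delta> | \<Delta> \<delta>. is_pert m n T \<epsilon>1 \<epsilon>2 \<Delta> \<delta>}"

definition col_canonical :: "nat \<Rightarrow> nat \<Rightarrow> peps \<Rightarrow> bool" where
  "col_canonical m n T \<longleftrightarrow> (\<forall>j<n - 1. \<forall>r\<in>rightC m n T j. \<forall>r'\<in>rightC m n T j.
     (\<Sum>x\<in>physC m T j. \<Sum>l\<in>leftC m T j. col_tensor m n T j x l r * col_tensor m n T j x l r')
       = (if r = r' then 1 else 0))"

definition last_canonical :: "nat \<Rightarrow> nat \<Rightarrow> peps \<Rightarrow> bool" where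
  "last_canonical m n T \<longleftrightarrow> (\<forall>i<m - 1. \<forall>d<vdim T i (n - 1). \<forall>d'<vdim T i (n - 1).
     (\<Sum>p<phys T i (n - 1). \<Sum>l<ldim T i (n - 1). \<Sum>u<udim T i (n - 1).
        node T i (n - 1) p l 0 u d * node T i (n - 1) p l 0 u d')
       = (if d = d' then 1 else 0))"

end

theory Submission
  imports Defs "HOL-Library.FuncSet" "HOL-Analysis.L2_Norm"
begin


definition Lb :: "(nat \<Rightarrow> 'b set) \<Rightarrow> 'b \<Rightarrow> nat \<Rightarrow> 'b set" where
  "Lb B z j = (if j = 0 then {z} else B (j - 1))"

definition shft :: "(nat \<Rightarrow> 'a) \<Rightarrow> nat \<Rightarrow> nat \<Rightarrow> 'a" where
  "shft f t j = f (t + j)"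

fun pre :: "(nat \<Rightarrow> 'p \<Rightarrow> 'b \<Rightarrow> 'b \<Rightarrow> real) \<Rightarrow> (nat \<Rightarrow> 'b set) \<Rightarrow> 'b \<Rightarrow> nat \<Rightarrow> (nat \<Rightarrow> 'p) \<Rightarrow> 'b \<Rightarrow> real" where
  "pre F B z 0 x b = (if b = z then 1 else 0)"
| "pre F B z (Suc k) x b = (\<Sum>a\<in>Lb B z k. pre F B z k x a * F k (x k) a b)"

definition mrg :: "nat \<Rightarrow> (nat \<Rightarrow> 'a) \<Rightarrow> (nat \<Rightarrow> 'a) \<Rightarrow> nat \<Rightarrow> 'a" where
  "mrg t y w i = (if i < t then y i else w (i - t))"

lemma Lb_shft: "Lb (shft B t) c r = (if r = 0 then {c} else B (t + r - 1))"
  by (simp add: Lb_def shft_def)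

lemma finite_Lb: "(\<And>j. finite (B j)) \<Longrightarrow> finite (Lb B z j)"
  by (simp add: Lb_def)

lemma pre_cong:
  assumes "\<And>j. j < k \<Longrightarrow> x j = x' j" "\<And>j. j < k \<Longrightarrow> F j = F' j"
  shows "pre F B z k x b = pre F' B z k x' b"
  using assms by (induction k arbitrary: b) auto

lemma sum_PiE_insert:
  assumes "k \<notin> S"
  shows "(\<Sum>g\<in>Pi\<^sub>E (insert k S) P. f g) = (\<Sum>a\<in>P k. \<Sum>g\<in>Pi\<^sub>E S P. f (g(k := a)))"
proof -
  have "(\<Sum>g\<in>Pi\<^sub>E (insert k S) P. f g) = (\<Sum>(a,g)\<in>P k \<times> Pi\<^sub>E S P. f (g(k := a)))"
    using assms
    by (intro sum.reindex_bij_witness[of _ "\<lambda>(y,g). g(k := y)" "\<lambda>g. (g k, g(k := undefined))"])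
       (auto simp: PiE_def extensional_def)
  also have "\<dots> = (\<Sum>a\<in>P k. \<Sum>g\<in>Pi\<^sub>E S P. f (g(k := a)))"
    by (subst sum.cartesian_product) auto
  finally show ?thesis .
qed

lemma sum_PiE_Suc:
  "(\<Sum>g\<in>Pi\<^sub>E {..<Suc k} P. f g) = (\<Sum>a\<in>P k. \<Sum>g\<in>Pi\<^sub>E {..<k} P. f (g(k := a)))"
  using sum_PiE_insert[where k=k and S="{..<k}" and P=P and f=f] by (simp add: lessThan_Suc)

lemma sum_PiE_one:
  "(\<Sum>g\<in>Pi\<^sub>E {..<Suc 0} P. f (g 0)) = (\<Sum>a\<in>P 0. f a)"
  by (subst sum_PiE_Suc) simp

lemma mrg_restrict:
  assumes x: "x \<in> Pi\<^sub>E {..<t + r} P"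
  shows "mrg t (restrict x {..<t}) (\<lambda>j\<in>{..<r}. x (t + j)) = x"
proof
  fix i
  show "mrg t (restrict x {..<t}) (\<lambda>j\<in>{..<r}. x (t + j)) i = x i"
  proof (cases "i < t")
    case True then show ?thesis by (simp add: mrg_def)
  next
    case False
    show ?thesis
    proof (cases "i < t + r")
      case True
      then have "i - t < r" "t + (i - t) = i" using False by auto
      then show ?thesis using False by (simp add: mrg_def)
    next
      case False': False
      then have "x i = undefined" using x by (auto simp: PiE_def extensional_def)
      moreover have "\<not> i - t < r" using False' by auto
      ultimately show ?thesis using False by (simp add: mrg_def)
    qed
  qed
qed

lemma mrg_in:
  assumes y: "y \<in> Pi\<^sub>E {..<t} P" and w: "w \<in> Pi\<^sub>E {..<r} (shft P t)"
  shows "mrg t y w \<in> Pi\<^sub>E {..<t + r} P"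
proof (rule PiE_I)
  fix i assume "i \<in> {..<t + r}"
  then have i: "i < t + r" by simp
  show "mrg t y w i \<in> P i"
  proof (cases "i < t")
    case True then show ?thesis using PiE_mem[OF y, of i] by (simp add: mrg_def)
  next
    case False
    then have "i - t < r" "t + (i - t) = i" using i by auto
    then have "w (i - t) \<in> P (t + (i - t))" using PiE_mem[OF w, of "i - t"] by (simp add: shft_def)
    then show ?thesis using False \<open>t + (i - t) = i\<close> by (simp add: mrg_def)
  qed
next
  fix i assume "i \<notin> {..<t + r}"
  then have "\<not> i < t" "\<not> i - t < r" by auto
  then show "mrg t y w i = undefined"
    using PiE_arb[OF w, of "i - t"] by (simp add: mrg_def)
qed

lemma restrict_mrg:
  assumes y: "y \<in> Pi\<^sub>E {..<t} P" and w: "w \<in> Pi\<^sub>E {..<r} Q"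
  shows "(restrict (mrg t y w) {..<t}, \<lambda>j\<in>{..<r}. mrg t y w (t + j)) = (y, w)"
proof -
  have "restrict (mrg t y w) {..<t} = y"
  proof
    fix i show "restrict (mrg t y w) {..<t} i = y i"
      using PiE_arb[OF y, of i] by (cases "i < t") (simp_all add: mrg_def)
  qed
  moreover have "(\<lambda>j\<in>{..<r}. mrg t y w (t + j)) = w"
  proof
    fix j show "(\<lambda>j\<in>{..<r}. mrg t y w (t + j)) j = w j"
      using PiE_arb[OF w, of j] by (cases "j < r") (simp_all add: mrg_def)
  qed
  ultimately show ?thesis by simp
qed

lemma sum_PiE_split:
  "(\<Sum>x\<in>Pi\<^sub>E {..<t + r} P. f x) =
   (\<Sum>y\<in>Pi\<^sub>E {..<t} P. \<Sum>w\<in>Pi\<^sub>E {..<r} (shft P t). f (mrg t y w))"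
proof -
  have "(\<Sum>x\<in>Pi\<^sub>E {..<t + r} P. f x) = (\<Sum>(y,w)\<in>Pi\<^sub>E {..<t} P \<times> Pi\<^sub>E {..<r} (shft P t). f (mrg t y w))"
  proof (rule sum.reindex_bij_witness[of _ "\<lambda>(y,w). mrg t y w" "\<lambda>x. (restrict x {..<t}, \<lambda>j\<in>{..<r}. x (t + j))"])
    fix a assume a: "a \<in> Pi\<^sub>E {..<t} P \<times> Pi\<^sub>E {..<r} (shft P t)"
    then obtain y w where yw: "a = (y, w)" "y \<in> Pi\<^sub>E {..<t} P" "w \<in> Pi\<^sub>E {..<r} (shft P t)" by auto
    show "(case a of (y, w) \<Rightarrow> mrg t y w) \<in> Pi\<^sub>E {..<t + r} P"
      using yw mrg_in by simp
    show "(restrict (case a of (y, w) \<Rightarrow> mrg t y w) {..<t}, \<lambda>j\<in>{..<r}. (case a of (y, w) \<Rightarrow> mrg t y w) (t + j)) = a"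
      using yw restrict_mrg by simp
  next
    fix x assume x: "x \<in> Pi\<^sub>E {..<t + r} P"
    show "(restrict x {..<t}, \<lambda>j\<in>{..<r}. x (t + j)) \<in> Pi\<^sub>E {..<t} P \<times> Pi\<^sub>E {..<r} (shft P t)"
      using x by (auto simp: PiE_def shft_def Pi_def)
    show "(case (restrict x {..<t}, \<lambda>j\<in>{..<r}. x (t + j)) of (y, w) \<Rightarrow> mrg t y w) = x"
      using mrg_restrict[OF x] by simp
    show "(case (restrict x {..<t}, \<lambda>j\<in>{..<r}. x (t + j)) of (y, w) \<Rightarrow> f (mrg t y w)) = f x"
      using mrg_restrict[OF x] by simp
  qed
  also have "\<dots> = (\<Sum>y\<in>Pi\<^sub>E {..<t} P. \<Sum>w\<in>Pi\<^sub>E {..<r} (shft P t). f (mrg t y w))"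
    by (subst sum.cartesian_product) auto
  finally show ?thesis .
qed

lemma shft_mrg[simp]: "shft (mrg t y w) t = w"
  by (simp add: shft_def mrg_def fun_eq_iff)

lemma pre_mrg: "pre F B z t (mrg t y w) b = pre F B z t y b"
  by (rule pre_cong) (auto simp: mrg_def)

lemma sq_sum: "(\<Sum>c\<in>C. f c)\<^sup>2 = (\<Sum>c\<in>C. \<Sum>c'\<in>C. f c * f c' :: real)"
  by (simp add: power2_eq_square sum_product)

lemma prod_sums: "(\<Sum>a\<in>A. f a * g a) * (\<Sum>a'\<in>A. f a' * h a') = (\<Sum>a\<in>A. \<Sum>a'\<in>A. (f a * f a') * (g a * h a' :: real))"
  by (simp add: sum_product mult_ac)

lemma swap3: "(\<Sum>x\<in>X. \<Sum>a\<in>A. \<Sum>b\<in>B. f x a b) = (\<Sum>a\<in>A. \<Sum>b\<in>B. \<Sum>x\<in>X. (f x a b :: real))"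
  by (subst sum.swap, rule sum.cong[OF refl], rule sum.swap)

lemma pre_assoc:
  assumes fin: "\<And>j. finite (B j)" and rb: "0 < r \<or> b \<in> Lb B z t"
  shows "pre F B z (t + r) x b = (\<Sum>c\<in>Lb B z t. pre F B z t x c * pre (shft F t) (shft B t) c r (shft x t) b)"
  using rb
proof (induction r arbitrary: b)
  case 0
  have "(\<Sum>c\<in>Lb B z t. pre F B z t x c * pre (shft F t) (shft B t) c 0 (shft x t) b)
      = (\<Sum>c\<in>Lb B z t. (if c = b then pre F B z t x c else 0))"
    by (intro sum.cong refl) auto
  also have "\<dots> = pre F B z t x b" using 0 fin by (simp add: sum.delta' finite_Lb)
  finally show ?case by simp
next
  case (Suc r)
  show ?case
  proof (cases "r = 0")
    case True
    have "pre F B z (t + Suc r) x b = (\<Sum>a\<in>Lb B z t. pre F B z t x a * F t (x t) a b)"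
      using True by (simp only: add_0_right add_Suc_right pre.simps)
    also have "\<dots> = (\<Sum>c\<in>Lb B z t. pre F B z t x c * pre (shft F t) (shft B t) c (Suc r) (shft x t) b)"
    proof (rule sum.cong[OF refl])
      fix c
      have "pre (shft F t) (shft B t) c (Suc r) (shft x t) b = F t (x t) c b"
        using True by (simp add: Lb_shft shft_def)
      then show "pre F B z t x c * F t (x t) c b = pre F B z t x c * pre (shft F t) (shft B t) c (Suc r) (shft x t) b" by simp
    qed
    finally show ?thesis .
  next
    case False
    have IH: "pre F B z (t + r) x a = (\<Sum>c\<in>Lb B z t. pre F B z t x c * pre (shft F t) (shft B t) c r (shft x t) a)" for a
      using False by (intro Suc.IH) simp
    have "pre F B z (t + Suc r) x b = (\<Sum>a\<in>Lb B z (t + r). pre F B z (t + r) x a * F (t + r) (x (t + r)) a b)"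
      by (simp only: add_Suc_right pre.simps)
    also have "\<dots> = (\<Sum>a\<in>Lb B z (t + r). \<Sum>c\<in>Lb B z t. pre F B z t x c * pre (shft F t) (shft B t) c r (shft x t) a * F (t + r) (x (t + r)) a b)"
      by (simp only: IH sum_distrib_right)
    also have "\<dots> = (\<Sum>c\<in>Lb B z t. \<Sum>a\<in>Lb B z (t + r). pre F B z t x c * (pre (shft F t) (shft B t) c r (shft x t) a * F (t + r) (x (t + r)) a b))"
      by (subst sum.swap) (simp only: mult.assoc)
    also have "\<dots> = (\<Sum>c\<in>Lb B z t. pre F B z t x c * pre (shft F t) (shft B t) c (Suc r) (shft x t) b)"
    proof (rule sum.cong[OF refl])
      fix c
      have rpos: "r \<noteq> 0" using False by simp
      have L1: "Lb (shft B t) c r = Lb B z (t + r)" using rpos by (simp add: Lb_shft Lb_def shft_def)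
      have "pre (shft F t) (shft B t) c (Suc r) (shft x t) b = (\<Sum>a\<in>Lb B z (t + r). pre (shft F t) (shft B t) c r (shft x t) a * F (t + r) (x (t + r)) a b)"
        by (simp only: pre.simps L1) (simp add: shft_def)
      then show "(\<Sum>a\<in>Lb B z (t + r). pre F B z t x c * (pre (shft F t) (shft B t) c r (shft x t) a * F (t + r) (x (t + r)) a b)) = pre F B z t x c * pre (shft F t) (shft B t) c (Suc r) (shft x t) b"
        by (simp add: sum_distrib_left)
    qed
    finally show ?thesis .
  qed
qed

definition iso :: "(nat \<Rightarrow> 'p \<Rightarrow> 'b \<Rightarrow> 'b \<Rightarrow> real) \<Rightarrow> (nat \<Rightarrow> 'p set) \<Rightarrow> (nat \<Rightarrow> 'b set) \<Rightarrow> 'b \<Rightarrow> nat \<Rightarrow> bool" where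
  "iso F P B z j \<longleftrightarrow> (\<forall>b\<in>B j. \<forall>b'\<in>B j.
     (\<Sum>p\<in>P j. \<Sum>a\<in>Lb B z j. F j p a b * F j p a b') = (if b = b' then 1 else 0))"

lemma pre_iso:
  assumes fin: "\<And>j. finite (B j)" and finP: "\<And>j. finite (P j)"
    and iso: "\<And>j. j < k \<Longrightarrow> iso F P B z j"
    and b: "b \<in> Lb B z k" and b': "b' \<in> Lb B z k"
  shows "(\<Sum>x\<in>Pi\<^sub>E {..<k} P. pre F B z k x b * pre F B z k x b') = (if b = b' then 1 else 0)"
  using iso b b'
proof (induction k arbitrary: b b')
  case 0
  then show ?case by (simp add: Lb_def)
next
  case (Suc k)
  have e: "pre F B z k (x(k := p)) a = pre F B z k x a" for x p a
    by (rule pre_cong) auto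
  have "(\<Sum>x\<in>Pi\<^sub>E {..<Suc k} P. pre F B z (Suc k) x b * pre F B z (Suc k) x b')
     = (\<Sum>p\<in>P k. \<Sum>x\<in>Pi\<^sub>E {..<k} P. (\<Sum>a\<in>Lb B z k. pre F B z k x a * F k p a b) * (\<Sum>a'\<in>Lb B z k. pre F B z k x a' * F k p a' b'))"
    by (subst sum_PiE_Suc) (simp add: e)
  also have "\<dots> = (\<Sum>p\<in>P k. \<Sum>a\<in>Lb B z k. \<Sum>a'\<in>Lb B z k. (\<Sum>x\<in>Pi\<^sub>E {..<k} P. pre F B z k x a * pre F B z k x a') * (F k p a b * F k p a' b'))"
  proof (rule sum.cong[OF refl])
    fix p
    have "(\<Sum>x\<in>Pi\<^sub>E {..<k} P. (\<Sum>a\<in>Lb B z k. pre F B z k x a * F k p a b) * (\<Sum>a'\<in>Lb B z k. pre F B z k x a' * F k p a' b'))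
      = (\<Sum>x\<in>Pi\<^sub>E {..<k} P. \<Sum>a\<in>Lb B z k. \<Sum>a'\<in>Lb B z k. (pre F B z k x a * pre F B z k x a') * (F k p a b * F k p a' b'))"
      by (simp only: prod_sums)
    also have "\<dots> = (\<Sum>a\<in>Lb B z k. \<Sum>a'\<in>Lb B z k. \<Sum>x\<in>Pi\<^sub>E {..<k} P. (pre F B z k x a * pre F B z k x a') * (F k p a b * F k p a' b'))"
      by (rule swap3)
    finally show "(\<Sum>x\<in>Pi\<^sub>E {..<k} P. (\<Sum>a\<in>Lb B z k. pre F B z k x a * F k p a b) * (\<Sum>a'\<in>Lb B z k. pre F B z k x a' * F k p a' b'))
      = (\<Sum>a\<in>Lb B z k. \<Sum>a'\<in>Lb B z k. (\<Sum>x\<in>Pi\<^sub>E {..<k} P. pre F B z k x a * pre F B z k x a') * (F k p a b * F k p a' b'))"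
      by (simp only: sum_distrib_right)
  qed
  also have "\<dots> = (\<Sum>p\<in>P k. \<Sum>a\<in>Lb B z k. F k p a b * F k p a b')"
  proof (rule sum.cong[OF refl])
    fix p
    have IH': "(\<Sum>x\<in>Pi\<^sub>E {..<k} P. pre F B z k x a * pre F B z k x a') = (if a = a' then 1 else 0)"
      if "a \<in> Lb B z k" "a' \<in> Lb B z k" for a a'
      using Suc.prems(1) that by (intro Suc.IH) auto
    have "(\<Sum>a\<in>Lb B z k. \<Sum>a'\<in>Lb B z k. (\<Sum>x\<in>Pi\<^sub>E {..<k} P. pre F B z k x a * pre F B z k x a') * (F k p a b * F k p a' b'))
       = (\<Sum>a\<in>Lb B z k. \<Sum>a'\<in>Lb B z k. (if a' = a then F k p a b * F k p a' b' else 0))"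
      by (intro sum.cong refl) (simp add: IH')
    also have "\<dots> = (\<Sum>a\<in>Lb B z k. F k p a b * F k p a b')"
      by (intro sum.cong refl) (simp add: sum.delta finite_Lb fin)
    finally show "(\<Sum>a\<in>Lb B z k. \<Sum>a'\<in>Lb B z k. (\<Sum>x\<in>Pi\<^sub>E {..<k} P. pre F B z k x a * pre F B z k x a') * (F k p a b * F k p a' b')) = (\<Sum>a\<in>Lb B z k. F k p a b * F k p a b')" .
  qed
  also have "\<dots> = (if b = b' then 1 else 0)"
  proof -
    have "iso F P B z k" using Suc.prems(1) by simp
    moreover have "b \<in> B k" "b' \<in> B k" using Suc.prems(2,3) by (simp_all add: Lb_def)
    ultimately show ?thesis unfolding iso_def by blast
  qed
  finally show ?case .
qed

lemma iso_norm:
  assumes "finite C" and "\<And>c c'. c \<in> C \<Longrightarrow> c' \<in> C \<Longrightarrow> (\<Sum>y\<in>Y. U y c * U y c') = (if c = c' then 1 else 0)"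
  shows "(\<Sum>y\<in>Y. (\<Sum>c\<in>C. U y c * g c)\<^sup>2) = (\<Sum>c\<in>C. (g c :: real)\<^sup>2)"
proof -
  have "(\<Sum>y\<in>Y. (\<Sum>c\<in>C. U y c * g c)\<^sup>2) = (\<Sum>y\<in>Y. \<Sum>c\<in>C. \<Sum>c'\<in>C. (U y c * U y c') * (g c * g c'))"
    unfolding sq_sum by (intro sum.cong refl) (simp add: mult_ac)
  also have "\<dots> = (\<Sum>c\<in>C. \<Sum>c'\<in>C. (\<Sum>y\<in>Y. U y c * U y c') * (g c * g c'))"
    unfolding sum_distrib_right by (rule swap3)
  also have "\<dots> = (\<Sum>c\<in>C. \<Sum>c'\<in>C. (if c' = c then g c * g c' else 0))"
    using assms(2) by (intro sum.cong refl) simp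
  also have "\<dots> = (\<Sum>c\<in>C. (g c)\<^sup>2)"
    using assms(1) by (simp add: sum.delta power2_eq_square)
  finally show ?thesis .
qed

lemma cs_sq: "(\<Sum>i\<in>A. f i * g i)\<^sup>2 \<le> (\<Sum>i\<in>A. (f i)\<^sup>2) * (\<Sum>i\<in>A. ((g i)::real)\<^sup>2)"
proof -
  have "\<bar>\<Sum>i\<in>A. f i * g i\<bar> \<le> (\<Sum>i\<in>A. \<bar>f i\<bar> * \<bar>g i\<bar>)"
    using sum_abs[of "\<lambda>i. f i * g i" A] by (simp add: abs_mult)
  also have "\<dots> \<le> L2_set f A * L2_set g A" by (rule L2_set_mult_ineq)
  finally have "\<bar>\<Sum>i\<in>A. f i * g i\<bar>\<^sup>2 \<le> (L2_set f A * L2_set g A)\<^sup>2"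
    using power_mono abs_ge_zero by blast
  then have "(\<Sum>i\<in>A. f i * g i)\<^sup>2 \<le> (L2_set f A * L2_set g A)\<^sup>2" by simp
  also have "\<dots> = (\<Sum>i\<in>A. (f i)\<^sup>2) * (\<Sum>i\<in>A. (g i)\<^sup>2)"
    by (simp add: L2_set_def power_mult_distrib sum_nonneg)
  finally show ?thesis .
qed


lemma iso_upd: "j \<noteq> t \<Longrightarrow> iso (F(t := D)) P B z j = iso F P B z j"
  by (simp add: iso_def)

lemma pre_one: "pre F B c (Suc 0) w d = F 0 (w 0) c d"
  by (simp add: Lb_def)

lemma G2:
  assumes fin: "\<And>j. finite (B j)" and finP: "\<And>j. finite (P j)"
    and iso: "\<And>j. j < s \<Longrightarrow> iso F P B z j"
    and rb: "0 < r \<or> zend \<in> Lb B z s"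
  shows "(\<Sum>x\<in>Pi\<^sub>E {..<s + r} P. (pre F B z (s + r) x zend)\<^sup>2)
       = (\<Sum>w\<in>Pi\<^sub>E {..<r} (shft P s). \<Sum>c\<in>Lb B z s. (pre (shft F s) (shft B s) c r w zend)\<^sup>2)"
proof -
  have "(\<Sum>x\<in>Pi\<^sub>E {..<s + r} P. (pre F B z (s + r) x zend)\<^sup>2)
     = (\<Sum>y\<in>Pi\<^sub>E {..<s} P. \<Sum>w\<in>Pi\<^sub>E {..<r} (shft P s). (pre F B z (s + r) (mrg s y w) zend)\<^sup>2)"
    by (rule sum_PiE_split)
  also have "\<dots> = (\<Sum>y\<in>Pi\<^sub>E {..<s} P. \<Sum>w\<in>Pi\<^sub>E {..<r} (shft P s).
        (\<Sum>c\<in>Lb B z s. pre F B z s y c * pre (shft F s) (shft B s) c r w zend)\<^sup>2)"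
    by (intro sum.cong refl) (simp only: pre_assoc[OF fin rb] pre_mrg shft_mrg)
  also have "\<dots> = (\<Sum>w\<in>Pi\<^sub>E {..<r} (shft P s). \<Sum>y\<in>Pi\<^sub>E {..<s} P.
        (\<Sum>c\<in>Lb B z s. pre F B z s y c * pre (shft F s) (shft B s) c r w zend)\<^sup>2)"
    by (rule sum.swap)
  also have "\<dots> = (\<Sum>w\<in>Pi\<^sub>E {..<r} (shft P s). \<Sum>c\<in>Lb B z s. (pre (shft F s) (shft B s) c r w zend)\<^sup>2)"
    by (intro sum.cong refl iso_norm finite_Lb fin pre_iso finP iso) auto
  finally show ?thesis .
qed

lemma G1:
  assumes fin: "\<And>j. finite (B j)" and finP: "\<And>j. finite (P j)"
    and iso: "\<And>j. j < t \<Longrightarrow> iso F P B z j"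
    and ze: "zend \<in> B (t + r)"
  shows "(\<Sum>x\<in>Pi\<^sub>E {..<t + Suc r} P. (pre (F(t := D)) B z (t + Suc r) x zend)\<^sup>2)
     \<le> (\<Sum>p\<in>P t. \<Sum>c\<in>Lb B z t. \<Sum>d\<in>B t. (D p c d)\<^sup>2) *
        (\<Sum>w\<in>Pi\<^sub>E {..<r} (shft P (Suc t)). \<Sum>d\<in>B t. (pre (shft F (Suc t)) (shft B (Suc t)) d r w zend)\<^sup>2)"
proof -
  let ?F = "F(t := D)"
  let ?R = "\<lambda>w d. pre (shft F (Suc t)) (shft B (Suc t)) d r w zend"
  have "(\<Sum>x\<in>Pi\<^sub>E {..<t + Suc r} P. (pre ?F B z (t + Suc r) x zend)\<^sup>2)
      = (\<Sum>w\<in>Pi\<^sub>E {..<Suc r} (shft P t). \<Sum>c\<in>Lb B z t. (pre (shft ?F t) (shft B t) c (Suc r) w zend)\<^sup>2)"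
    by (rule G2) (auto simp: fin finP iso iso_upd)
  also have "\<dots> = (\<Sum>w\<in>Pi\<^sub>E {..<Suc r} (shft P t). \<Sum>c\<in>Lb B z t.
                    (\<Sum>d\<in>B t. D (w 0) c d * ?R (shft w 1) d)\<^sup>2)"
  proof (intro sum.cong refl)
    fix w c
    have sh1: "shft (shft ?F t) (Suc 0) = shft F (Suc t)" "shft (shft B t) (Suc 0) = shft B (Suc t)"
      by (auto simp: shft_def fun_eq_iff)
    have L: "Lb (shft B t) c (Suc 0) = B t" by (simp add: Lb_def shft_def)
    have rb: "0 < r \<or> zend \<in> Lb (shft B t) c 1" using ze L by (cases r) simp_all
    have "pre (shft ?F t) (shft B t) c (1 + r) w zend
        = (\<Sum>d\<in>Lb (shft B t) c 1. pre (shft ?F t) (shft B t) c 1 w d * pre (shft (shft ?F t) 1) (shft (shft B t) 1) d r (shft w 1) zend)"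
      apply (rule pre_assoc)
       apply (simp add: shft_def fin)
      using rb by simp
    also have "\<dots> = (\<Sum>d\<in>B t. D (w 0) c d * ?R (shft w 1) d)"
      by (simp only: One_nat_def L sh1 pre_one) (simp add: shft_def)
    finally show "(pre (shft ?F t) (shft B t) c (Suc r) w zend)\<^sup>2 = (\<Sum>d\<in>B t. D (w 0) c d * ?R (shft w 1) d)\<^sup>2"
      by simp
  qed
  also have "\<dots> = (\<Sum>y\<in>Pi\<^sub>E {..<Suc 0} (shft P t). \<Sum>w'\<in>Pi\<^sub>E {..<r} (shft (shft P t) 1). \<Sum>c\<in>Lb B z t.
                    (\<Sum>d\<in>B t. D (mrg 1 y w' 0) c d * ?R (shft (mrg 1 y w') 1) d)\<^sup>2)"
    using sum_PiE_split[where t=1 and r=r and P="shft P t"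
        and f="\<lambda>w. \<Sum>c\<in>Lb B z t. (\<Sum>d\<in>B t. D (w 0) c d * ?R (shft w 1) d)\<^sup>2"] by simp
  also have "\<dots> = (\<Sum>p\<in>P t. \<Sum>w'\<in>Pi\<^sub>E {..<r} (shft P (Suc t)). \<Sum>c\<in>Lb B z t.
                    (\<Sum>d\<in>B t. D p c d * ?R w' d)\<^sup>2)"
  proof -
    have e1: "mrg (Suc 0) y w' 0 = y 0" for y w' by (simp add: mrg_def)
    have e2: "shft (shft P t) (Suc 0) = shft P (Suc t)" by (auto simp: shft_def fun_eq_iff)
    have e3: "shft P t 0 = P t" by (simp add: shft_def)
    show ?thesis
      using sum_PiE_one[where P="shft P t" and f="\<lambda>p. \<Sum>w'\<in>Pi\<^sub>E {..<r} (shft P (Suc t)). \<Sum>c\<in>Lb B z t.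
                    (\<Sum>d\<in>B t. D p c d * ?R w' d)\<^sup>2"]
      by (simp only: One_nat_def e1 e2 shft_mrg e3)
  qed
  also have "\<dots> \<le> (\<Sum>p\<in>P t. \<Sum>w'\<in>Pi\<^sub>E {..<r} (shft P (Suc t)). \<Sum>c\<in>Lb B z t.
                    (\<Sum>d\<in>B t. (D p c d)\<^sup>2) * (\<Sum>d\<in>B t. (?R w' d)\<^sup>2))"
    by (intro sum_mono cs_sq)
  also have "\<dots> = (\<Sum>p\<in>P t. \<Sum>c\<in>Lb B z t. \<Sum>d\<in>B t. (D p c d)\<^sup>2) *
        (\<Sum>w\<in>Pi\<^sub>E {..<r} (shft P (Suc t)). \<Sum>d\<in>B t. (?R w d)\<^sup>2)"
  proof -
    have "(\<Sum>w'\<in>Pi\<^sub>E {..<r} (shft P (Suc t)). \<Sum>c\<in>Lb B z t. (\<Sum>d\<in>B t. (D p c d)\<^sup>2) * (\<Sum>d\<in>B t. (?R w' d)\<^sup>2))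
        = (\<Sum>c\<in>Lb B z t. (\<Sum>d\<in>B t. (D p c d)\<^sup>2) * (\<Sum>w\<in>Pi\<^sub>E {..<r} (shft P (Suc t)). \<Sum>d\<in>B t. (?R w d)\<^sup>2))" for p
      by (subst sum.swap) (simp only: sum_distrib_left)
    then show ?thesis by (simp only: sum_distrib_right)
  qed
  finally show ?thesis .
qed


lemma pre_explicit:
  "pre F B z (Suc k) x b = (\<Sum>bs\<in>Pi\<^sub>E {..<k} B.
      \<Prod>j<Suc k. F j (x j) (if j = 0 then z else bs (j - 1)) (if j < k then bs j else b))"
proof (induction k arbitrary: b)
  case 0
  then show ?case by (simp add: Lb_def)
next
  case (Suc k)
  have "pre F B z (Suc (Suc k)) x b = (\<Sum>a\<in>B k. pre F B z (Suc k) x a * F (Suc k) (x (Suc k)) a b)"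
    by (simp add: Lb_def)
  also have "\<dots> = (\<Sum>a\<in>B k. \<Sum>bs\<in>Pi\<^sub>E {..<k} B.
      (\<Prod>j<Suc k. F j (x j) (if j = 0 then z else bs (j - 1)) (if j < k then bs j else a)) * F (Suc k) (x (Suc k)) a b)"
    by (simp only: Suc.IH sum_distrib_right)
  also have "\<dots> = (\<Sum>bs\<in>Pi\<^sub>E {..<Suc k} B.
      \<Prod>j<Suc (Suc k). F j (x j) (if j = 0 then z else bs (j - 1)) (if j < Suc k then bs j else b))"
  proof -
    have "(\<Prod>j<Suc (Suc k). F j (x j) (if j = 0 then z else (bs(k := a)) (j - 1)) (if j < Suc k then (bs(k := a)) j else b))
      = (\<Prod>j<Suc k. F j (x j) (if j = 0 then z else bs (j - 1)) (if j < k then bs j else a)) * F (Suc k) (x (Suc k)) a b"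
      for bs a
    proof -
      have "(\<Prod>j<Suc k. F j (x j) (if j = 0 then z else (bs(k := a)) (j - 1)) (if j < Suc k then (bs(k := a)) j else b))
          = (\<Prod>j<Suc k. F j (x j) (if j = 0 then z else bs (j - 1)) (if j < k then bs j else a))"
        by (intro prod.cong refl) auto
      then show ?thesis by (simp add: Suc_diff_1)
    qed
    then show ?thesis
      by (subst sum_PiE_Suc) (simp only:)
  qed
  finally show ?case .
qed

definition FO1 :: "'a set \<Rightarrow> ('a \<Rightarrow> real) \<Rightarrow> ('a \<Rightarrow> real) \<Rightarrow> real" where
  "FO1 J a d = (\<Sum>k\<in>J. d k * (\<Prod>j\<in>J - {k}. a j))"

lemma prod_abs_le:
  fixes a c :: "'a \<Rightarrow> real"
  assumes "\<And>j. j \<in> J \<Longrightarrow> \<bar>a j\<bar> \<le> c j"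
  shows "\<bar>\<Prod>j\<in>J. a j\<bar> \<le> (\<Prod>j\<in>J. c j)"
  unfolding abs_prod by (intro prod_mono) (auto simp: assms)

lemma FO1_insert:
  assumes "finite J" "i \<notin> J"
  shows "FO1 (insert i J) a d = d i * (\<Prod>j\<in>J. a j) + a i * FO1 J a d"
proof -
  have "FO1 (insert i J) a d = d i * (\<Prod>j\<in>insert i J - {i}. a j) + (\<Sum>k\<in>J. d k * (\<Prod>j\<in>insert i J - {k}. a j))"
    using assms by (simp add: FO1_def)
  also have "(\<Prod>j\<in>insert i J - {i}. a j) = (\<Prod>j\<in>J. a j)"
    using assms by (simp add: insert_Diff_if)
  also have "(\<Sum>k\<in>J. d k * (\<Prod>j\<in>insert i J - {k}. a j)) = (\<Sum>k\<in>J. a i * (d k * (\<Prod>j\<in>J - {k}. a j)))"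
  proof (intro sum.cong refl)
    fix k assume k: "k \<in> J"
    then have "insert i J - {k} = insert i (J - {k})" using assms by auto
    then have "(\<Prod>j\<in>insert i J - {k}. a j) = a i * (\<Prod>j\<in>J - {k}. a j)"
      using assms by simp
    then show "d k * (\<Prod>j\<in>insert i J - {k}. a j) = a i * (d k * (\<Prod>j\<in>J - {k}. a j))" by simp
  qed
  finally show ?thesis by (simp add: FO1_def sum_distrib_left)
qed

lemma FO1_bound:
  assumes "finite J" "\<And>j. j \<in> J \<Longrightarrow> \<bar>a j\<bar> \<le> c j" "\<And>j. j \<in> J \<Longrightarrow> \<bar>d j\<bar> \<le> e * c j" "0 \<le> e"
  shows "\<bar>FO1 J a d\<bar> \<le> real (card J) * e * (\<Prod>j\<in>J. c j)"
  using assms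
proof (induction J rule: finite_induct)
  case empty
  then show ?case by (simp add: FO1_def)
next
  case (insert i J)
  have c0: "\<And>j. j \<in> insert i J \<Longrightarrow> 0 \<le> c j" using insert.prems(1) by (meson abs_ge_zero order_trans)
  have pa: "\<bar>\<Prod>j\<in>J. a j\<bar> \<le> (\<Prod>j\<in>J. c j)" by (rule prod_abs_le) (use insert.prems in auto)
  have IH: "\<bar>FO1 J a d\<bar> \<le> real (card J) * e * (\<Prod>j\<in>J. c j)" using insert by auto
  have pc: "0 \<le> (\<Prod>j\<in>J. c j)" using c0 by (simp add: prod_nonneg)
  have "\<bar>FO1 (insert i J) a d\<bar> \<le> \<bar>d i\<bar> * \<bar>\<Prod>j\<in>J. a j\<bar> + \<bar>a i\<bar> * \<bar>FO1 J a d\<bar>"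
    using insert by (simp add: FO1_insert abs_mult order_trans[OF abs_triangle_ineq])
  also have "\<dots> \<le> (e * c i) * (\<Prod>j\<in>J. c j) + c i * (real (card J) * e * (\<Prod>j\<in>J. c j))"
    by (intro add_mono mult_mono insert.prems pa IH) (auto simp: c0 pc insert.prems(3))
  also have "\<dots> = real (card (insert i J)) * e * (\<Prod>j\<in>insert i J. c j)"
    using insert by (simp add: algebra_simps)
  finally show ?case .
qed

lemma prod_pert_bound:
  fixes a d c :: "'a \<Rightarrow> real"
  assumes "finite J" "\<And>j. j \<in> J \<Longrightarrow> \<bar>a j\<bar> \<le> c j" "\<And>j. j \<in> J \<Longrightarrow> \<bar>d j\<bar> \<le> e * c j" "0 \<le> e"
  shows "\<bar>\<Prod>j\<in>J. a j + d j\<bar> \<le> (1 + e) ^ card J * (\<Prod>j\<in>J. c j)"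
proof -
  have "\<bar>\<Prod>j\<in>J. a j + d j\<bar> \<le> (\<Prod>j\<in>J. (1 + e) * c j)"
  proof (rule prod_abs_le)
    fix j assume "j \<in> J"
    then have "\<bar>a j + d j\<bar> \<le> c j + e * c j" using abs_triangle_ineq[of "a j" "d j"] assms(2,3)[of j] by linarith
    then show "\<bar>a j + d j\<bar> \<le> (1 + e) * c j" by (simp add: algebra_simps)
  qed
  also have "\<dots> = (1 + e) ^ card J * (\<Prod>j\<in>J. c j)" by (simp add: prod.distrib)
  finally show ?thesis .
qed

lemma rem_bound:
  assumes "finite J" "\<And>j. j \<in> J \<Longrightarrow> \<bar>a j\<bar> \<le> c j" "\<And>j. j \<in> J \<Longrightarrow> \<bar>d j\<bar> \<le> e * c j" "0 \<le> e"
  shows "\<bar>(\<Prod>j\<in>J. a j + d j) - (\<Prod>j\<in>J. a j) - FO1 J a d\<bar> \<le> real (card J)^2 * e^2 * ((1 + e) ^ card J * (\<Prod>j\<in>J. c j))"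
  using assms
proof (induction J rule: finite_induct)
  case empty
  then show ?case by (simp add: FO1_def)
next
  case (insert i J)
  let ?R = "(\<Prod>j\<in>J. a j + d j) - (\<Prod>j\<in>J. a j) - FO1 J a d"
  let ?N = "real (card J)"
  let ?P = "(\<Prod>j\<in>J. c j)"
  have c0: "\<And>j. j \<in> insert i J \<Longrightarrow> 0 \<le> c j" using insert.prems(1) by (meson abs_ge_zero order_trans)
  have pc: "0 \<le> ?P" using c0 by (simp add: prod_nonneg)
  have IH: "\<bar>?R\<bar> \<le> ?N^2 * e^2 * ((1 + e) ^ card J * ?P)" using insert by auto
  have S: "\<bar>FO1 J a d\<bar> \<le> ?N * e * ?P" by (rule FO1_bound) (use insert in auto)
  have eq: "(\<Prod>j\<in>insert i J. a j + d j) - (\<Prod>j\<in>insert i J. a j) - FO1 (insert i J) a d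
      = (a i + d i) * ?R + d i * FO1 J a d"
    using insert by (simp add: FO1_insert algebra_simps)
  have ad: "\<bar>a i + d i\<bar> \<le> (1 + e) * c i"
    using insert.prems(1,2)[of i] abs_triangle_ineq[of "a i" "d i"] by (simp add: algebra_simps)
  have "\<bar>(a i + d i) * ?R + d i * FO1 J a d\<bar> \<le> \<bar>a i + d i\<bar> * \<bar>?R\<bar> + \<bar>d i\<bar> * \<bar>FO1 J a d\<bar>"
    by (simp add: abs_mult order_trans[OF abs_triangle_ineq])
  also have "\<dots> \<le> ((1 + e) * c i) * (?N^2 * e^2 * ((1 + e) ^ card J * ?P)) + (e * c i) * (?N * e * ?P)"
    by (intro add_mono mult_mono ad IH insert.prems S) (auto simp: c0 pc insert.prems(3))
  also have "\<dots> \<le> ((1 + e) * c i) * (?N^2 * e^2 * ((1 + e) ^ card J * ?P)) + ((1 + e) * (1 + e) ^ card J) * ((2 * ?N + 1) * (c i * e^2 * ?P))"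
  proof -
    let ?X = "c i * e^2 * ?P"
    let ?g = "(1 + e) * (1 + e) ^ card J"
    have X0: "0 \<le> ?X" using c0[of i] pc by simp
    have g: "1 \<le> ?g" using insert.prems(3) by (metis le_add_same_cancel1 one_le_power power_Suc)
    have "(e * c i) * (?N * e * ?P) = ?N * ?X" by (simp add: power2_eq_square mult_ac)
    also have "\<dots> \<le> (2 * ?N + 1) * ?X" using X0 by (intro mult_right_mono) auto
    also have "\<dots> \<le> ?g * ((2 * ?N + 1) * ?X)"
      using mult_right_mono[OF g, of "(2 * ?N + 1) * ?X"] X0 by simp
    finally show ?thesis by simp
  qed
  also have "\<dots> = real (card (insert i J))^2 * e^2 * ((1 + e) ^ card (insert i J) * (\<Prod>j\<in>insert i J. c j))"
    using insert by (simp add: algebra_simps power2_eq_square)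
  finally show ?case using eq by simp
qed


lemma abs_le_sqrt_sum:
  assumes "finite A" "a \<in> A"
  shows "\<bar>f a\<bar> \<le> sqrt (\<Sum>x\<in>A. (f x)\<^sup>2)"
proof -
  have "(f a)\<^sup>2 \<le> (\<Sum>x\<in>A. (f x)\<^sup>2)" using assms by (intro member_le_sum) auto
  then have "sqrt ((f a)\<^sup>2) \<le> sqrt (\<Sum>x\<in>A. (f x)\<^sup>2)" by (rule real_sqrt_le_mono)
  then show ?thesis by simp
qed

lemma le_sum3:
  fixes g :: "'a \<Rightarrow> 'b \<Rightarrow> 'c \<Rightarrow> real"
  assumes "finite A" "finite B" "finite C" "a \<in> A" "b \<in> B" "c \<in> C" "\<And>x y z. 0 \<le> g x y z"
  shows "g a b c \<le> (\<Sum>x\<in>A. \<Sum>y\<in>B. \<Sum>z\<in>C. g x y z)"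
proof -
  have "g a b c \<le> (\<Sum>z\<in>C. g a b z)" using assms by (intro member_le_sum) auto
  also have "\<dots> \<le> (\<Sum>y\<in>B. \<Sum>z\<in>C. g a y z)"
    using assms by (intro member_le_sum[where f="\<lambda>y. \<Sum>z\<in>C. g a y z"]) (auto intro!: sum_nonneg)
  also have "\<dots> \<le> (\<Sum>x\<in>A. \<Sum>y\<in>B. \<Sum>z\<in>C. g x y z)"
    using assms by (intro member_le_sum[where f="\<lambda>x. \<Sum>y\<in>B. \<Sum>z\<in>C. g x y z"]) (auto intro!: sum_nonneg)
  finally show ?thesis .
qed

lemma sq_le_sum3:
  fixes f :: "'a \<Rightarrow> 'b \<Rightarrow> 'c \<Rightarrow> real"
  assumes "finite A" "finite B" "finite C" "a \<in> A" "b \<in> B" "c \<in> C"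
  shows "(f a b c)\<^sup>2 \<le> (\<Sum>x\<in>A. \<Sum>y\<in>B. \<Sum>z\<in>C. (f x y z)\<^sup>2)"
  using assms by (intro le_sum3) auto

lemma sq_le_sum5:
  fixes f :: "nat \<Rightarrow> nat \<Rightarrow> nat \<Rightarrow> nat \<Rightarrow> nat \<Rightarrow> real"
  assumes "p < P" "l < L" "r < R" "u < U" "d < Dd"
  shows "(f p l r u d)\<^sup>2 \<le> (\<Sum>p<P. \<Sum>l<L. \<Sum>r<R. \<Sum>u<U. \<Sum>d<Dd. (f p l r u d)\<^sup>2)"
proof -
  have "(f p l r u d)\<^sup>2 \<le> (\<Sum>u<U. \<Sum>d<Dd. (f p l r u d)\<^sup>2)"
    using sq_le_sum3[of "{0::nat}" "{..<U}" "{..<Dd}" 0 u d "\<lambda>_ u d. f p l r u d"] assms by simp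
  also have "\<dots> \<le> (\<Sum>p<P. \<Sum>l<L. \<Sum>r<R. \<Sum>u<U. \<Sum>d<Dd. (f p l r u d)\<^sup>2)"
    using le_sum3[of "{..<P}" "{..<L}" "{..<R}" p l r "\<lambda>p l r. \<Sum>u<U. \<Sum>d<Dd. (f p l r u d)\<^sup>2"] assms
    by (simp add: sum_nonneg)
  finally show ?thesis .
qed

lemma finite_physC[simp]: "finite (physC m U j)" by (simp add: physC_def finite_PiE)
lemma finite_leftC[simp]: "finite (leftC m U j)" by (simp add: leftC_def finite_PiE)
lemma finite_rightC[simp]: "finite (rightC m n U j)" by (simp add: rightC_def finite_PiE)
lemma finite_vbonds_col[simp]: "finite (vbonds_col m U j)" by (simp add: vbonds_col_def finite_PiE)
lemma finite_hbonds[simp]: "finite (hbonds m n U)"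
proof -
  have "{(i, j). i < m \<and> j + 1 < n} \<subseteq> {..<m} \<times> {..<n}" by auto
  then have "finite {(i, j). i < m \<and> j + 1 < n}" by (rule finite_subset) auto
  then show ?thesis unfolding hbonds_def by (intro finite_PiE) auto
qed
lemma finite_vbonds[simp]: "finite (vbonds m n U)"
proof -
  have "{(i, j). i + 1 < m \<and> j < n} \<subseteq> {..<m} \<times> {..<n}" by auto
  then have "finite {(i, j). i + 1 < m \<and> j < n}" by (rule finite_subset) auto
  then show ?thesis unfolding vbonds_def by (intro finite_PiE) auto
qed
lemma finite_physIdx[simp]: "finite (physIdx m n U)"
  unfolding physIdx_def by (intro finite_PiE) auto

lemma cshape_entry:
  assumes "p \<in> physC m U j" "l \<in> leftC m U j" "r \<in> rightC m n U j"
  shows "\<bar>t p l r\<bar> \<le> cshape_norm m n U j t"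
proof -
  have "(t p l r)\<^sup>2 \<le> (\<Sum>x\<in>physC m U j. \<Sum>l\<in>leftC m U j. \<Sum>r\<in>rightC m n U j. (t x l r)\<^sup>2)"
    using assms by (intro sq_le_sum3) auto
  then have "sqrt ((t p l r)\<^sup>2) \<le> cshape_norm m n U j t" unfolding cshape_norm_def by (rule real_sqrt_le_mono)
  then show ?thesis by simp
qed

lemma nshape_entry:
  assumes "p < phys U i j" "l < ldim U i j" "r < rdim n U i j" "u < udim U i j" "d < ddim m U i j"
  shows "\<bar>t p l r u d\<bar> \<le> nshape_norm m n U i j t"
proof -
  have "(t p l r u d)\<^sup>2 \<le> (\<Sum>p<phys U i j. \<Sum>l<ldim U i j. \<Sum>r<rdim n U i j. \<Sum>u<udim U i j. \<Sum>d<ddim m U i j. (t p l r u d)\<^sup>2)"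
    using assms by (intro sq_le_sum5)
  then have "sqrt ((t p l r u d)\<^sup>2) \<le> nshape_norm m n U i j t" unfolding nshape_norm_def by (rule real_sqrt_le_mono)
  then show ?thesis by simp
qed

lemma cshape_nonneg: "0 \<le> cshape_norm m n U j t" by (simp add: cshape_norm_def sum_nonneg)
lemma nshape_nonneg: "0 \<le> nshape_norm m n U i j t" by (simp add: nshape_norm_def sum_nonneg)

lemma L2_bound:
  assumes "finite A" "\<And>x. x \<in> A \<Longrightarrow> \<bar>f x\<bar> \<le> M"
  shows "sqrt (\<Sum>x\<in>A. (f x)\<^sup>2) \<le> sqrt (real (card A)) * M"
proof -
  have M0: "A \<noteq> {} \<Longrightarrow> 0 \<le> M" using assms(2) by (meson abs_ge_zero all_not_in_conv order_trans)
  have "(\<Sum>x\<in>A. (f x)\<^sup>2) \<le> (\<Sum>x\<in>A. M\<^sup>2)"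
    using assms by (intro sum_mono) (metis abs_ge_zero power2_abs power_mono)
  also have "\<dots> = real (card A) * M\<^sup>2" by simp
  finally have "sqrt (\<Sum>x\<in>A. (f x)\<^sup>2) \<le> sqrt (real (card A) * M\<^sup>2)" by (rule real_sqrt_le_mono)
  also have "\<dots> = sqrt (real (card A)) * M"
    using M0 by (cases "A = {}") (simp_all add: real_sqrt_mult)
  finally show ?thesis .
qed


definition vmap :: "nat \<Rightarrow> nat \<Rightarrow> (nat \<times> nat \<Rightarrow> nat) \<Rightarrow> nat \<Rightarrow> nat \<Rightarrow> nat" where
  "vmap m n v = (\<lambda>j\<in>{..<n}. \<lambda>i\<in>{..<m - 1}. v (i, j))"
definition vunmap :: "nat \<Rightarrow> nat \<Rightarrow> (nat \<Rightarrow> nat \<Rightarrow> nat) \<Rightarrow> nat \<times> nat \<Rightarrow> nat" where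
  "vunmap m n V = (\<lambda>(i, j). if i + 1 < m \<and> j < n then V j i else undefined)"

lemma vmap_bij:
  shows "\<And>v. v \<in> vbonds m n U \<Longrightarrow> vunmap m n (vmap m n v) = v"
    and "\<And>v. v \<in> vbonds m n U \<Longrightarrow> vmap m n v \<in> Pi\<^sub>E {..<n} (vbonds_col m U)"
    and "\<And>V. V \<in> Pi\<^sub>E {..<n} (vbonds_col m U) \<Longrightarrow> vmap m n (vunmap m n V) = V"
    and "\<And>V. V \<in> Pi\<^sub>E {..<n} (vbonds_col m U) \<Longrightarrow> vunmap m n V \<in> vbonds m n U"
proof -
  fix v assume v: "v \<in> vbonds m n U"
  show "vunmap m n (vmap m n v) = v"
  proof
    fix ij :: "nat \<times> nat"
    obtain i j where ij: "ij = (i, j)" by force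
    show "vunmap m n (vmap m n v) ij = v ij"
    proof (cases "i + 1 < m \<and> j < n")
      case True
      then have "i < m - 1" by auto
      then show ?thesis using True by (simp add: ij vunmap_def vmap_def)
    next
      case False
      then have "v (i, j) = undefined" using v unfolding vbonds_def by (intro PiE_arb[of v]) auto
      then show ?thesis using False by (simp add: ij vunmap_def vmap_def)
    qed
  qed
  show "vmap m n v \<in> Pi\<^sub>E {..<n} (vbonds_col m U)"
  proof (rule PiE_I)
    fix j assume j: "j \<in> {..<n}"
    show "vmap m n v j \<in> vbonds_col m U j"
      unfolding vbonds_col_def
    proof (rule PiE_I)
      fix i assume "i \<in> {..<m - 1}"
      then have ij: "(i, j) \<in> {(i, j). i + 1 < m \<and> j < n}" using j by auto
      have "v (i, j) \<in> {..<vdim U i j}" using PiE_mem[OF v[unfolded vbonds_def] ij] by simp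
      then show "vmap m n v j i \<in> {..<vdim U i j}" using j \<open>i \<in> {..<m - 1}\<close> by (simp add: vmap_def)
    next
      fix i assume "i \<notin> {..<m - 1}"
      then show "vmap m n v j i = undefined" using j by (simp add: vmap_def)
    qed
  next
    fix j assume "j \<notin> {..<n}"
    then show "vmap m n v j = undefined" by (simp add: vmap_def)
  qed
next
  fix V assume V: "V \<in> Pi\<^sub>E {..<n} (vbonds_col m U)"
  show "vmap m n (vunmap m n V) = V"
  proof
    fix j
    show "vmap m n (vunmap m n V) j = V j"
    proof (cases "j < n")
      case True
      then have Vj: "V j \<in> Pi\<^sub>E {..<m - 1} (\<lambda>i. {..<vdim U i j})" using PiE_mem[OF V] by (simp add: vbonds_col_def)
      show ?thesis
      proof
        fix i show "vmap m n (vunmap m n V) j i = V j i"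
        proof (cases "i < m - 1")
          case True': True
          then have "i + 1 < m" by simp
          then show ?thesis using True True' by (simp add: vmap_def vunmap_def)
        next
          case False
          then show ?thesis using True PiE_arb[OF Vj, of i] by (simp add: vmap_def)
        qed
      qed
    next
      case False
      then show ?thesis using PiE_arb[OF V, of j] by (simp add: vmap_def)
    qed
  qed
  show "vunmap m n V \<in> vbonds m n U"
    unfolding vbonds_def
  proof (rule PiE_I)
    fix ij assume ij: "ij \<in> {(i, j). i + 1 < m \<and> j < n}"
    obtain i j where e0: "ij = (i, j)" by force
    then have e: "ij = (i, j)" "i + 1 < m" "j < n" using ij by auto
    have Vj: "V j \<in> vbonds_col m U j" using PiE_mem[OF V, of j] e by simp
    have "i \<in> {..<m - 1}" using e by simp
    then have "V j i \<in> {..<vdim U i j}" using PiE_mem[OF Vj[unfolded vbonds_col_def]] by simp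
    then show "vunmap m n V ij \<in> (case ij of (i, j) \<Rightarrow> {..<vdim U i j})" using e by (simp add: vunmap_def)
  next
    fix ij assume ij: "ij \<notin> {(i, j). i + 1 < m \<and> j < n}"
    obtain i j where e: "ij = (i, j)" by force
    show "vunmap m n V ij = undefined" using ij e by (auto simp: vunmap_def)
  qed
qed

lemma col_tensor_expand:
  "col_tensor m n U j (xcol m x j) (lcol m h j) (rcol m n h j)
   = (\<Sum>v\<in>vbonds_col m U j. \<Prod>i<m. node U i j (x (i, j)) (lidx h i j) (ridx n h i j) (cu v i) (cd m v i))"
  unfolding col_tensor_def xcol_def lcol_def rcol_def
  by (intro sum.cong refl prod.cong) auto

lemma last_col_expand:
  assumes "1 \<le> n"
  shows "last_col m n U \<delta> (xcol m x (n - 1)) (lcol m h (n - 1))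
   = (\<Sum>v\<in>vbonds_col m U (n - 1). \<Prod>i<m. node U i (n - 1) (x (i, n - 1)) (lidx h i (n - 1)) (ridx n h i (n - 1)) (cu v i) (cd m v i)
        + \<delta> i (x (i, n - 1)) (lidx h i (n - 1)) (ridx n h i (n - 1)) (cu v i) (cd m v i))"
  using assms unfolding last_col_def xcol_def lcol_def ridx_def
  by (intro sum.cong refl prod.cong) auto

lemma pert0_eq:
  assumes n: "1 \<le> n"
  shows "pert_contraction m n U (\<lambda>_ _ _ _. 0) (\<lambda>_ _ _ _ _ _. 0) x = contraction m n U x"
proof -
  let ?G = "\<lambda>h j v. \<Prod>i<m. node U i j (x (i, j)) (lidx h i j) (ridx n h i j) (cu v i) (cd m v i)"
  have "pert_contraction m n U (\<lambda>_ _ _ _. 0) (\<lambda>_ _ _ _ _ _. 0) x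
      = (\<Sum>h\<in>hbonds m n U. \<Prod>j<n. \<Sum>v\<in>vbonds_col m U j. ?G h j v)"
    unfolding pert_contraction_def
  proof (intro sum.cong refl)
    fix h
    have e: "n = Suc (n - 1)" using n by simp
    have "(\<Prod>j<n. \<Sum>v\<in>vbonds_col m U j. ?G h j v) = (\<Prod>j<n - 1. \<Sum>v\<in>vbonds_col m U j. ?G h j v) * (\<Sum>v\<in>vbonds_col m U (n - 1). ?G h (n - 1) v)"
      by (subst e) (simp only: prod.lessThan_Suc diff_Suc_1)
    then show "(\<Prod>j<n - 1. col_tensor m n U j (xcol m x j) (lcol m h j) (rcol m n h j) + 0) *
          last_col m n U (\<lambda>_ _ _ _ _ _. 0) (xcol m x (n - 1)) (lcol m h (n - 1))
        = (\<Prod>j<n. \<Sum>v\<in>vbonds_col m U j. ?G h j v)"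
      by (simp only: add_0_right col_tensor_expand last_col_expand[OF n])
  qed
  also have "\<dots> = (\<Sum>h\<in>hbonds m n U. \<Sum>V\<in>Pi\<^sub>E {..<n} (vbonds_col m U). \<Prod>j<n. ?G h j (V j))"
    by (intro sum.cong refl prod_sum_PiE) auto
  also have "\<dots> = contraction m n U x"
    unfolding contraction_def
  proof (intro sum.cong refl)
    fix h
    show "(\<Sum>V\<in>Pi\<^sub>E {..<n} (vbonds_col m U). \<Prod>j<n. ?G h j (V j))
      = (\<Sum>v\<in>vbonds m n U. \<Prod>i<m. \<Prod>j<n. node U i j (x (i, j)) (lidx h i j) (ridx n h i j) (uidx v i j) (didx m v i j))"
    proof (rule sum.reindex_bij_witness[of _ "vmap m n" "vunmap m n"])
      fix V assume V: "V \<in> Pi\<^sub>E {..<n} (vbonds_col m U)"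
      show "vmap m n (vunmap m n V) = V" using vmap_bij(3)[OF V] .
      show "vunmap m n V \<in> vbonds m n U" using vmap_bij(4)[OF V] .
      have "(\<Prod>j<n. ?G h j (V j)) = (\<Prod>j<n. \<Prod>i<m. node U i j (x (i, j)) (lidx h i j) (ridx n h i j) (uidx (vunmap m n V) i j) (didx m (vunmap m n V) i j))"
      proof (intro prod.cong refl)
        fix j i assume j: "j \<in> {..<n}" and i: "i \<in> {..<m}"
        have "cu (V j) i = uidx (vunmap m n V) i j"
        proof (cases "i = 0")
          case False
          then have "i - 1 + 1 < m" using i by simp
          then show ?thesis using j False by (simp add: cu_def uidx_def vunmap_def)
        qed (simp add: cu_def uidx_def)
        moreover have "cd m (V j) i = didx m (vunmap m n V) i j" using j by (simp add: cd_def didx_def vunmap_def)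
        ultimately show "node U i j (x (i, j)) (lidx h i j) (ridx n h i j) (cu (V j) i) (cd m (V j) i)
          = node U i j (x (i, j)) (lidx h i j) (ridx n h i j) (uidx (vunmap m n V) i j) (didx m (vunmap m n V) i j)" by simp
      qed
      then show "(\<Prod>i<m. \<Prod>j<n. node U i j (x (i, j)) (lidx h i j) (ridx n h i j) (uidx (vunmap m n V) i j) (didx m (vunmap m n V) i j)) = (\<Prod>j<n. ?G h j (V j))"
        by (simp add: prod.swap[of _ "{..<n}"])
    next
      fix v assume v: "v \<in> vbonds m n U"
      show "vunmap m n (vmap m n v) = v" using vmap_bij(1)[OF v] .
      show "vmap m n v \<in> Pi\<^sub>E {..<n} (vbonds_col m U)" using vmap_bij(2)[OF v] .
    qed
  qed
  finally show ?thesis .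
qed

lemma pert_scale:
  fixes e1 e2 :: real
  shows "pert_contraction m n U (\<lambda>j. \<lambda>p a b. e1 * col_tensor m n U j p a b) (\<lambda>i. \<lambda>p l r u d. e2 * node U i (n - 1) p l r u d) x
       = (1 + e1) ^ (n - 1) * (1 + e2) ^ m * pert_contraction m n U (\<lambda>_ _ _ _. 0) (\<lambda>_ _ _ _ _ _. 0) x"
proof -
  have eqf: "\<And>y. y + e1 * y = (1 + e1) * y" "\<And>y. y + e2 * y = (1 + e2) * y" by algebra+
  have L: "last_col m n U (\<lambda>i. \<lambda>p l r u d. e2 * node U i (n - 1) p l r u d) xc l
      = (1 + e2) ^ m * last_col m n U (\<lambda>_ _ _ _ _ _. 0) xc l" for xc l
    unfolding last_col_def sum_distrib_left
    by (intro sum.cong refl) (simp only: eqf add_0_right prod.distrib prod_constant card_lessThan)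
  have P: "(\<Prod>j<n - 1. col_tensor m n U j (xcol m x j) (lcol m h j) (rcol m n h j) + e1 * col_tensor m n U j (xcol m x j) (lcol m h j) (rcol m n h j))
      = (1 + e1) ^ (n - 1) * (\<Prod>j<n - 1. col_tensor m n U j (xcol m x j) (lcol m h j) (rcol m n h j) + 0)" for h
    by (simp only: eqf add_0_right prod.distrib prod_constant card_lessThan)
  show ?thesis
    unfolding pert_contraction_def sum_distrib_left
    by (intro sum.cong refl) (simp only: L P mult_ac)
qed


lemma xcol_in: "x \<in> physIdx m n U \<Longrightarrow> j < n \<Longrightarrow> xcol m x j \<in> physC m U j"
  unfolding physC_def
proof (rule PiE_I)
  fix i assume x: "x \<in> physIdx m n U" and j: "j < n" and i: "i \<in> {..<m}"
  have ij: "(i, j) \<in> {..<m} \<times> {..<n}" using i j by simp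
  have "x (i, j) \<in> {..<phys U i j}" using PiE_mem[OF x[unfolded physIdx_def] ij] by simp
  then show "xcol m x j i \<in> {..<phys U i j}" using i by (simp add: xcol_def)
next
  fix i assume "i \<notin> {..<m}" then show "xcol m x j i = undefined" by (simp add: xcol_def)
qed

lemma x_lt: "x \<in> physIdx m n U \<Longrightarrow> i < m \<Longrightarrow> j < n \<Longrightarrow> x (i, j) < phys U i j"
proof -
  assume x: "x \<in> physIdx m n U" and "i < m" "j < n"
  then have ij: "(i, j) \<in> {..<m} \<times> {..<n}" by simp
  show ?thesis using PiE_mem[OF x[unfolded physIdx_def] ij] by simp
qed

lemma h_lt: "h \<in> hbonds m n U \<Longrightarrow> i < m \<Longrightarrow> j + 1 < n \<Longrightarrow> h (i, j) < hdim U i j"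
proof -
  assume h: "h \<in> hbonds m n U" and "i < m" "j + 1 < n"
  then have ij: "(i, j) \<in> {(i, j). i < m \<and> j + 1 < n}" by simp
  show ?thesis using PiE_mem[OF h[unfolded hbonds_def] ij] by simp
qed

lemma lidx_lt: "h \<in> hbonds m n U \<Longrightarrow> i < m \<Longrightarrow> j < n \<Longrightarrow> lidx h i j < ldim U i j"
proof -
  assume h: "h \<in> hbonds m n U" and i: "i < m" and j: "j < n"
  show ?thesis
  proof (cases "j = 0")
    case False
    then have "j - 1 + 1 < n" using j by simp
    then show ?thesis using h_lt[OF h i] False by (simp add: lidx_def ldim_def)
  qed (simp add: lidx_def ldim_def)
qed

lemma ridx_lt: "h \<in> hbonds m n U \<Longrightarrow> i < m \<Longrightarrow> j < n \<Longrightarrow> ridx n h i j < rdim n U i j"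
  using h_lt by (auto simp: ridx_def rdim_def)

lemma lcol_in: "h \<in> hbonds m n U \<Longrightarrow> j < n \<Longrightarrow> lcol m h j \<in> leftC m U j"
  unfolding leftC_def
proof (rule PiE_I)
  fix i assume "h \<in> hbonds m n U" "j < n" "i \<in> {..<m}"
  then show "lcol m h j i \<in> {..<ldim U i j}" using lidx_lt by (simp add: lcol_def)
next
  fix i assume "i \<notin> {..<m}" then show "lcol m h j i = undefined" by (simp add: lcol_def)
qed

lemma rcol_in: "h \<in> hbonds m n U \<Longrightarrow> j < n \<Longrightarrow> rcol m n h j \<in> rightC m n U j"
  unfolding rightC_def
proof (rule PiE_I)
  fix i assume "h \<in> hbonds m n U" "j < n" "i \<in> {..<m}"
  then show "rcol m n h j i \<in> {..<rdim n U i j}" using ridx_lt by (simp add: rcol_def)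
next
  fix i assume "i \<notin> {..<m}" then show "rcol m n h j i = undefined" by (simp add: rcol_def)
qed

lemma cu_lt: "v \<in> vbonds_col m U j \<Longrightarrow> i < m \<Longrightarrow> cu v i < udim U i j"
proof -
  assume v: "v \<in> vbonds_col m U j" and i: "i < m"
  show ?thesis
  proof (cases "i = 0")
    case False
    then have i1: "i - 1 \<in> {..<m - 1}" using i by simp
    have "v (i - 1) \<in> {..<vdim U (i - 1) j}" using PiE_mem[OF v[unfolded vbonds_col_def] i1] by simp
    then show ?thesis using False by (simp add: cu_def udim_def)
  qed (simp add: cu_def udim_def)
qed

lemma cd_lt: "v \<in> vbonds_col m U j \<Longrightarrow> i < m \<Longrightarrow> cd m v i < ddim m U i j"
proof -
  assume v: "v \<in> vbonds_col m U j" and i: "i < m"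
  show ?thesis
  proof (cases "i + 1 < m")
    case True
    then have i1: "i \<in> {..<m - 1}" by simp
    have "v i \<in> {..<vdim U i j}" using PiE_mem[OF v[unfolded vbonds_col_def] i1] by simp
    then show ?thesis using True by (simp add: cd_def ddim_def)
  qed (simp add: cd_def ddim_def)
qed

lemma rdim_last: "1 \<le> n \<Longrightarrow> rdim n U i (n - 1) = 1"
  by (simp add: rdim_def)

lemma cshape_scale: "0 \<le> e \<Longrightarrow> cshape_norm m n U j (\<lambda>p a b. e * t p a b) = e * cshape_norm m n U j t"
  unfolding cshape_norm_def
  by (simp add: power_mult_distrib sum_distrib_left[symmetric] real_sqrt_mult)

lemma nshape_scale: "0 \<le> e \<Longrightarrow> nshape_norm m n U i j (\<lambda>p l r u d. e * t p l r u d) = e * nshape_norm m n U i j t"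
  unfolding nshape_norm_def
  by (simp add: power_mult_distrib sum_distrib_left[symmetric] real_sqrt_mult)

lemma cshape_zero: "cshape_norm m n U j (\<lambda>_ _ _. 0) = 0" by (simp add: cshape_norm_def)
lemma nshape_zero: "nshape_norm m n U i j (\<lambda>_ _ _ _ _. 0) = 0" by (simp add: nshape_norm_def)

lemma is_pert_zero: "0 \<le> e1 \<Longrightarrow> 0 \<le> e2 \<Longrightarrow> is_pert m n U e1 e2 (\<lambda>_ _ _ _. 0) (\<lambda>_ _ _ _ _ _. 0)"
  by (simp add: is_pert_def cshape_zero nshape_zero cshape_nonneg nshape_nonneg)

definition MU :: "nat \<Rightarrow> nat \<Rightarrow> peps \<Rightarrow> real" where
  "MU m n U = real (card (hbonds m n U)) * (2 ^ (n - 1) * (\<Prod>j<n - 1. cshape_norm m n U j (col_tensor m n U j))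
     * (real (card (vbonds_col m U (n - 1))) * (2 ^ m * (\<Prod>i<m. nshape_norm m n U i (n - 1) (node U i (n - 1))))))"

lemma sum_abs_bound:
  assumes "finite A" "\<And>x. x \<in> A \<Longrightarrow> \<bar>f x\<bar> \<le> M"
  shows "\<bar>\<Sum>x\<in>A. f x\<bar> \<le> real (card A) * M"
proof -
  have "\<bar>\<Sum>x\<in>A. f x\<bar> \<le> (\<Sum>x\<in>A. \<bar>f x\<bar>)" by (rule sum_abs)
  also have "\<dots> \<le> (\<Sum>x\<in>A. M)" using assms by (intro sum_mono) auto
  finally show ?thesis by simp
qed

lemma last_col_bound:
  assumes n: "1 \<le> n" and e2: "0 \<le> e2" "e2 \<le> 1"
    and d: "\<forall>i<m. nshape_norm m n U i (n - 1) (\<delta> i) \<le> e2 * nshape_norm m n U i (n - 1) (node U i (n - 1))"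
    and xc: "\<And>i. i < m \<Longrightarrow> xc i < phys U i (n - 1)" and l: "\<And>i. i < m \<Longrightarrow> l i < ldim U i (n - 1)"
  shows "\<bar>last_col m n U \<delta> xc l\<bar> \<le> real (card (vbonds_col m U (n - 1))) * (2 ^ m * (\<Prod>i<m. nshape_norm m n U i (n - 1) (node U i (n - 1))))"
  unfolding last_col_def
proof (rule sum_abs_bound)
  fix v assume v: "v \<in> vbonds_col m U (n - 1)"
  have "\<bar>\<Prod>i<m. node U i (n - 1) (xc i) (l i) 0 (cu v i) (cd m v i) + \<delta> i (xc i) (l i) 0 (cu v i) (cd m v i)\<bar>
      \<le> (1 + e2) ^ card {..<m} * (\<Prod>i<m. nshape_norm m n U i (n - 1) (node U i (n - 1)))"
  proof (rule prod_pert_bound)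
    fix i assume "i \<in> {..<m}"
    then have i: "i < m" by simp
    have idx: "xc i < phys U i (n - 1)" "l i < ldim U i (n - 1)" "0 < rdim n U i (n - 1)"
      "cu v i < udim U i (n - 1)" "cd m v i < ddim m U i (n - 1)"
      using xc[OF i] l[OF i] rdim_last[OF n] cu_lt[OF v i] cd_lt[OF v i] by auto
    show "\<bar>node U i (n - 1) (xc i) (l i) 0 (cu v i) (cd m v i)\<bar> \<le> nshape_norm m n U i (n - 1) (node U i (n - 1))"
      using idx by (rule nshape_entry)
    have "\<bar>\<delta> i (xc i) (l i) 0 (cu v i) (cd m v i)\<bar> \<le> nshape_norm m n U i (n - 1) (\<delta> i)"
      using idx by (rule nshape_entry)
    then show "\<bar>\<delta> i (xc i) (l i) 0 (cu v i) (cd m v i)\<bar> \<le> e2 * nshape_norm m n U i (n - 1) (node U i (n - 1))"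
      using d i by (meson order_trans)
  qed (use e2 in auto)
  also have "\<dots> \<le> 2 ^ m * (\<Prod>i<m. nshape_norm m n U i (n - 1) (node U i (n - 1)))"
  proof -
    have "(1 + e2) ^ m \<le> 2 ^ m" by (rule power_mono) (use e2 in auto)
    then show ?thesis by (auto intro!: mult_right_mono prod_nonneg nshape_nonneg)
  qed
  finally show "\<bar>\<Prod>i<m. node U i (n - 1) (xc i) (l i) 0 (cu v i) (cd m v i) + \<delta> i (xc i) (l i) 0 (cu v i) (cd m v i)\<bar>
      \<le> 2 ^ m * (\<Prod>i<m. nshape_norm m n U i (n - 1) (node U i (n - 1)))" .
qed simp

lemma pert_bound:
  assumes n: "1 \<le> n" and e: "0 \<le> e1" "e1 \<le> 1" "0 \<le> e2" "e2 \<le> 1"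
    and p: "is_pert m n U e1 e2 \<Delta> \<delta>" and x: "x \<in> physIdx m n U"
  shows "\<bar>pert_contraction m n U \<Delta> \<delta> x\<bar> \<le> MU m n U"
  unfolding pert_contraction_def MU_def
proof (rule sum_abs_bound)
  fix h assume h: "h \<in> hbonds m n U"
  have A: "\<bar>\<Prod>j<n - 1. col_tensor m n U j (xcol m x j) (lcol m h j) (rcol m n h j) + \<Delta> j (xcol m x j) (lcol m h j) (rcol m n h j)\<bar>
     \<le> 2 ^ (n - 1) * (\<Prod>j<n - 1. cshape_norm m n U j (col_tensor m n U j))"
  proof -
    have "\<bar>\<Prod>j<n - 1. col_tensor m n U j (xcol m x j) (lcol m h j) (rcol m n h j) + \<Delta> j (xcol m x j) (lcol m h j) (rcol m n h j)\<bar>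
     \<le> (1 + e1) ^ card {..<n - 1} * (\<Prod>j<n - 1. cshape_norm m n U j (col_tensor m n U j))"
    proof (rule prod_pert_bound)
      fix j assume "j \<in> {..<n - 1}"
      then have j: "j < n" "j < n - 1" by auto
      have idx: "xcol m x j \<in> physC m U j" "lcol m h j \<in> leftC m U j" "rcol m n h j \<in> rightC m n U j"
        using xcol_in[OF x j(1)] lcol_in[OF h j(1)] rcol_in[OF h j(1)] by auto
      show "\<bar>col_tensor m n U j (xcol m x j) (lcol m h j) (rcol m n h j)\<bar> \<le> cshape_norm m n U j (col_tensor m n U j)"
        using idx by (rule cshape_entry)
      have "\<bar>\<Delta> j (xcol m x j) (lcol m h j) (rcol m n h j)\<bar> \<le> cshape_norm m n U j (\<Delta> j)"
        using idx by (rule cshape_entry)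
      then show "\<bar>\<Delta> j (xcol m x j) (lcol m h j) (rcol m n h j)\<bar> \<le> e1 * cshape_norm m n U j (col_tensor m n U j)"
        using p j(2) unfolding is_pert_def by (meson order_trans)
    qed (use e in auto)
    also have "\<dots> \<le> 2 ^ (n - 1) * (\<Prod>j<n - 1. cshape_norm m n U j (col_tensor m n U j))"
    proof -
      have "(1 + e1) ^ (n - 1) \<le> 2 ^ (n - 1)" by (rule power_mono) (use e in auto)
      then show ?thesis by (auto intro!: mult_right_mono prod_nonneg cshape_nonneg)
    qed
    finally show ?thesis .
  qed
  have B: "\<bar>last_col m n U \<delta> (xcol m x (n - 1)) (lcol m h (n - 1))\<bar>
     \<le> real (card (vbonds_col m U (n - 1))) * (2 ^ m * (\<Prod>i<m. nshape_norm m n U i (n - 1) (node U i (n - 1))))"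
  proof (rule last_col_bound[OF n e(3,4)])
    show "\<forall>i<m. nshape_norm m n U i (n - 1) (\<delta> i) \<le> e2 * nshape_norm m n U i (n - 1) (node U i (n - 1))"
      using p unfolding is_pert_def by blast
    fix i assume i: "i < m"
    show "xcol m x (n - 1) i < phys U i (n - 1)" using x_lt[OF x i] n i by (simp add: xcol_def)
    show "lcol m h (n - 1) i < ldim U i (n - 1)" using lidx_lt[OF h i] n i by (simp add: lcol_def)
  qed
  show "\<bar>(\<Prod>j<n - 1. col_tensor m n U j (xcol m x j) (lcol m h j) (rcol m n h j) + \<Delta> j (xcol m x j) (lcol m h j) (rcol m n h j)) *
          last_col m n U \<delta> (xcol m x (n - 1)) (lcol m h (n - 1))\<bar>
     \<le> 2 ^ (n - 1) * (\<Prod>j<n - 1. cshape_norm m n U j (col_tensor m n U j)) *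
       (real (card (vbonds_col m U (n - 1))) * (2 ^ m * (\<Prod>i<m. nshape_norm m n U i (n - 1) (node U i (n - 1)))))"
    unfolding abs_mult by (intro mult_mono A B) (auto intro!: mult_nonneg_nonneg prod_nonneg cshape_nonneg)
qed simp

lemma MU_nonneg: "0 \<le> MU m n U"
  unfolding MU_def by (intro mult_nonneg_nonneg prod_nonneg cshape_nonneg nshape_nonneg) auto

lemma tensor_norm_diff_le:
  assumes "\<And>x. x \<in> physIdx m n U \<Longrightarrow> \<bar>f x\<bar> \<le> M"
  shows "tensor_norm m n U f \<le> sqrt (real (card (physIdx m n U))) * M"
  unfolding tensor_norm_def by (rule L2_bound) (use assms in auto)

lemma rel_err_bdd:
  assumes n: "1 \<le> n" and e: "0 \<le> e1" "e1 \<le> 1" "0 \<le> e2" "e2 \<le> 1"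
    and p: "is_pert m n U e1 e2 \<Delta> \<delta>"
  shows "rel_err m n U \<Delta> \<delta> \<le> sqrt (real (card (physIdx m n U))) * (2 * MU m n U) / tensor_norm m n U (contraction m n U)"
proof -
  have "tensor_norm m n U (\<lambda>x. pert_contraction m n U \<Delta> \<delta> x - contraction m n U x) \<le> sqrt (real (card (physIdx m n U))) * (2 * MU m n U)"
  proof (rule tensor_norm_diff_le)
    fix x assume x: "x \<in> physIdx m n U"
    have "\<bar>contraction m n U x\<bar> \<le> MU m n U"
      using pert_bound[OF n e is_pert_zero[OF e(1,3)] x] pert0_eq[OF n] by simp
    moreover have "\<bar>pert_contraction m n U \<Delta> \<delta> x\<bar> \<le> MU m n U" by (rule pert_bound[OF n e p x])
    ultimately show "\<bar>pert_contraction m n U \<Delta> \<delta> x - contraction m n U x\<bar> \<le> 2 * MU m n U" by linarith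
  qed
  then show ?thesis unfolding rel_err_def
    by (intro divide_right_mono) (auto simp: tensor_norm_def intro!: sum_nonneg)
qed

lemma rel_err_scaled:
  assumes n: "1 \<le> n" and nz: "tensor_norm m n U (contraction m n U) \<noteq> 0" and e: "0 \<le> e1" "0 \<le> e2"
  shows "rel_err m n U (\<lambda>j. \<lambda>p a b. e1 * col_tensor m n U j p a b) (\<lambda>i. \<lambda>p l r u d. e2 * node U i (n - 1) p l r u d)
       = (1 + e1) ^ (n - 1) * (1 + e2) ^ m - 1"
proof -
  let ?k = "(1 + e1) ^ (n - 1) * (1 + e2) ^ m"
  have a: "1 \<le> (1 + e1) ^ (n - 1)" "1 \<le> (1 + e2) ^ m" using e by (simp_all add: one_le_power)
  have k1: "1 \<le> ?k" using mult_mono[OF a(1) a(2)] e by simp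
  have "(\<lambda>x. pert_contraction m n U (\<lambda>j. \<lambda>p a b. e1 * col_tensor m n U j p a b) (\<lambda>i. \<lambda>p l r u d. e2 * node U i (n - 1) p l r u d) x - contraction m n U x)
      = (\<lambda>x. (?k - 1) * contraction m n U x)"
    by (rule ext, simp only: pert_scale pert0_eq[OF n]) (simp add: algebra_simps)
  moreover have "tensor_norm m n U (\<lambda>x. (?k - 1) * contraction m n U x) = (?k - 1) * tensor_norm m n U (contraction m n U)"
    unfolding tensor_norm_def using k1
    by (simp add: power_mult_distrib sum_distrib_left[symmetric] real_sqrt_mult)
  ultimately show ?thesis using nz unfolding rel_err_def by simp
qed

lemma kappa_ge:
  fixes e1 e2 :: real
  assumes "0 \<le> e1" "0 \<le> e2"
  shows "real (n - 1) * e1 + real m * e2 \<le> (1 + e1) ^ (n - 1) * (1 + e2) ^ m - 1"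
proof -
  have a: "1 + real (n - 1) * e1 \<le> (1 + e1) ^ (n - 1)" using assms by (intro Bernoulli_inequality) auto
  have b: "1 + real m * e2 \<le> (1 + e2) ^ m" using assms by (intro Bernoulli_inequality) auto
  have "(1 + real (n - 1) * e1) * (1 + real m * e2) \<le> (1 + e1) ^ (n - 1) * (1 + e2) ^ m"
    using a b assms by (intro mult_mono) auto
  moreover have "0 \<le> real (n - 1) * e1 * (real m * e2)" using assms by simp
  ultimately show ?thesis by (simp add: algebra_simps)
qed


definition zH :: "nat \<Rightarrow> nat \<Rightarrow> nat" where "zH m = (\<lambda>i\<in>{..<m}. 0)"
definition FH :: "nat \<Rightarrow> (nat \<Rightarrow> 'x \<Rightarrow> 'b \<Rightarrow> 'b \<Rightarrow> real) \<Rightarrow> ('x \<Rightarrow> 'b \<Rightarrow> real) \<Rightarrow> nat \<Rightarrow> 'x \<Rightarrow> 'b \<Rightarrow> 'b \<Rightarrow> real" where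
  "FH n A L j = (if j < n - 1 then A j else (\<lambda>p a b. L p a))"
definition XH :: "nat \<Rightarrow> nat \<Rightarrow> (nat \<times> nat \<Rightarrow> nat) \<Rightarrow> nat \<Rightarrow> nat \<Rightarrow> nat" where
  "XH m n x = (\<lambda>j\<in>{..<n}. xcol m x j)"
definition hmap :: "nat \<Rightarrow> nat \<Rightarrow> (nat \<times> nat \<Rightarrow> nat) \<Rightarrow> nat \<Rightarrow> nat \<Rightarrow> nat" where
  "hmap m n h = (\<lambda>j\<in>{..<n - 1}. rcol m n h j)"
definition hunmap :: "nat \<Rightarrow> nat \<Rightarrow> (nat \<Rightarrow> nat \<Rightarrow> nat) \<Rightarrow> nat \<times> nat \<Rightarrow> nat" where
  "hunmap m n bs = (\<lambda>(i, j). if i < m \<and> j + 1 < n then bs j i else undefined)"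
definition xunmap :: "nat \<Rightarrow> nat \<Rightarrow> (nat \<Rightarrow> nat \<Rightarrow> nat) \<Rightarrow> nat \<times> nat \<Rightarrow> nat" where
  "xunmap m n X = (\<lambda>(i, j). if i < m \<and> j < n then X j i else undefined)"

lemma lcol_0: "lcol m h 0 = zH m"
  by (simp add: lcol_def zH_def lidx_def)

lemma lcol_pos: "0 < j \<Longrightarrow> j < n \<Longrightarrow> lcol m h j = rcol m n h (j - 1)"
  by (auto simp: lcol_def rcol_def lidx_def ridx_def fun_eq_iff)

lemma hmap_bij:
  shows "\<And>h. h \<in> hbonds m n U \<Longrightarrow> hunmap m n (hmap m n h) = h"
    and "\<And>h. h \<in> hbonds m n U \<Longrightarrow> hmap m n h \<in> Pi\<^sub>E {..<n - 1} (rightC m n U)"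
    and "\<And>bs. bs \<in> Pi\<^sub>E {..<n - 1} (rightC m n U) \<Longrightarrow> hmap m n (hunmap m n bs) = bs"
    and "\<And>bs. bs \<in> Pi\<^sub>E {..<n - 1} (rightC m n U) \<Longrightarrow> hunmap m n bs \<in> hbonds m n U"
proof -
  fix h assume h: "h \<in> hbonds m n U"
  show "hunmap m n (hmap m n h) = h"
  proof
    fix ij :: "nat \<times> nat"
    obtain i j where ij: "ij = (i, j)" by force
    show "hunmap m n (hmap m n h) ij = h ij"
    proof (cases "i < m \<and> j + 1 < n")
      case True
      then have "j < n - 1" by auto
      then show ?thesis using True by (simp add: ij hunmap_def hmap_def rcol_def ridx_def)
    next
      case False
      then have nin: "(i, j) \<notin> {(i, j). i < m \<and> j + 1 < n}" by simp
      have "h (i, j) = undefined" using PiE_arb[OF h[unfolded hbonds_def] nin] .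
      then show ?thesis using False by (auto simp: ij hunmap_def)
    qed
  qed
  show "hmap m n h \<in> Pi\<^sub>E {..<n - 1} (rightC m n U)"
  proof (rule PiE_I)
    fix j assume "j \<in> {..<n - 1}"
    then have j: "j < n" "j < n - 1" by auto
    show "hmap m n h j \<in> rightC m n U j" using rcol_in[OF h j(1)] j(2) by (simp add: hmap_def)
  next
    fix j assume "j \<notin> {..<n - 1}"
    then show "hmap m n h j = undefined" by (simp add: hmap_def)
  qed
next
  fix bs assume bs: "bs \<in> Pi\<^sub>E {..<n - 1} (rightC m n U)"
  show "hmap m n (hunmap m n bs) = bs"
  proof
    fix j
    show "hmap m n (hunmap m n bs) j = bs j"
    proof (cases "j < n - 1")
      case True
      have jm: "j \<in> {..<n - 1}" using True by simp
      have bj: "bs j \<in> rightC m n U j" using PiE_mem[OF bs jm] .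
      have jn: "j + 1 < n" using True by simp
      show ?thesis
      proof
        fix i show "hmap m n (hunmap m n bs) j i = bs j i"
        proof (cases "i < m")
          case True': True
          then show ?thesis using True jn by (simp add: hmap_def hunmap_def rcol_def ridx_def)
        next
          case False
          then have "i \<notin> {..<m}" by simp
          then have "bs j i = undefined" using PiE_arb[OF bj[unfolded rightC_def]] by simp
          then show ?thesis using True False by (simp add: hmap_def rcol_def)
        qed
      qed
    next
      case False
      then have "j \<notin> {..<n - 1}" by simp
      then show ?thesis using PiE_arb[OF bs] False by (simp add: hmap_def)
    qed
  qed
  show "hunmap m n bs \<in> hbonds m n U"
    unfolding hbonds_def
  proof (rule PiE_I)
    fix ij assume ij: "ij \<in> {(i, j). i < m \<and> j + 1 < n}"
    obtain i j where e0: "ij = (i, j)" by force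
    then have e: "i < m" "j + 1 < n" using ij by auto
    have jm: "j \<in> {..<n - 1}" using e by simp
    have bj: "bs j \<in> rightC m n U j" using PiE_mem[OF bs jm] .
    have im: "i \<in> {..<m}" using e by simp
    have "bs j i \<in> {..<rdim n U i j}" using PiE_mem[OF bj[unfolded rightC_def] im] by simp
    then show "hunmap m n bs ij \<in> (case ij of (i, j) \<Rightarrow> {..<hdim U i j})"
      using e e0 by (simp add: hunmap_def rdim_def)
  next
    fix ij assume ij: "ij \<notin> {(i, j). i < m \<and> j + 1 < n}"
    obtain i j where e: "ij = (i, j)" by force
    show "hunmap m n bs ij = undefined" using ij e by (auto simp: hunmap_def)
  qed
qed

lemma H1:
  assumes n: "1 \<le> n"
  shows "(\<Sum>h\<in>hbonds m n U. (\<Prod>j<n - 1. A j (xcol m x j) (lcol m h j) (rcol m n h j)) * L (xcol m x (n - 1)) (lcol m h (n - 1)))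
    = pre (FH n A L) (rightC m n U) (zH m) n (XH m n x) (zH m)"
proof -
  have e: "n = Suc (n - 1)" using n by simp
  have "pre (FH n A L) (rightC m n U) (zH m) n (XH m n x) (zH m) =
     (\<Sum>bs\<in>Pi\<^sub>E {..<n - 1} (rightC m n U). \<Prod>j<Suc (n - 1). FH n A L j (XH m n x j) (if j = 0 then zH m else bs (j - 1)) (if j < n - 1 then bs j else zH m))"
    by (subst e) (simp only: pre_explicit diff_Suc_1)
  also have "\<dots> = (\<Sum>h\<in>hbonds m n U. (\<Prod>j<n - 1. A j (xcol m x j) (lcol m h j) (rcol m n h j)) * L (xcol m x (n - 1)) (lcol m h (n - 1)))"
  proof (rule sym, rule sum.reindex_bij_witness[of _ "hunmap m n" "hmap m n"])
    fix bs assume bs: "bs \<in> Pi\<^sub>E {..<n - 1} (rightC m n U)"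
    show "hmap m n (hunmap m n bs) = bs" using hmap_bij(3)[OF bs] .
    show "hunmap m n bs \<in> hbonds m n U" using hmap_bij(4)[OF bs] .
  next
    fix h assume h: "h \<in> hbonds m n U"
    show "hunmap m n (hmap m n h) = h" using hmap_bij(1)[OF h] .
    show "hmap m n h \<in> Pi\<^sub>E {..<n - 1} (rightC m n U)" using hmap_bij(2)[OF h] .
    have lb: "(if j = 0 then zH m else hmap m n h (j - 1)) = lcol m h j" if "j < n" for j
    proof (cases "j = 0")
      case False
      then have "j - 1 < n - 1" "0 < j" using that by auto
      then show ?thesis using that False by (simp add: lcol_pos hmap_def)
    qed (simp add: lcol_0)
    have "(\<Prod>j<Suc (n - 1). FH n A L j (XH m n x j) (if j = 0 then zH m else hmap m n h (j - 1)) (if j < n - 1 then hmap m n h j else zH m))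
        = (\<Prod>j<n - 1. FH n A L j (XH m n x j) (if j = 0 then zH m else hmap m n h (j - 1)) (if j < n - 1 then hmap m n h j else zH m))
          * FH n A L (n - 1) (XH m n x (n - 1)) (if n - 1 = 0 then zH m else hmap m n h (n - 1 - 1)) (zH m)"
      by (simp only: prod.lessThan_Suc) simp
    also have "\<dots> = (\<Prod>j<n - 1. A j (xcol m x j) (lcol m h j) (rcol m n h j)) * L (xcol m x (n - 1)) (lcol m h (n - 1))"
    proof -
      have "(\<Prod>j<n - 1. FH n A L j (XH m n x j) (if j = 0 then zH m else hmap m n h (j - 1)) (if j < n - 1 then hmap m n h j else zH m))
          = (\<Prod>j<n - 1. A j (xcol m x j) (lcol m h j) (rcol m n h j))"
      proof (intro prod.cong refl)
        fix j assume "j \<in> {..<n - 1}"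
        then have j: "j < n - 1" "j < n" by auto
        show "FH n A L j (XH m n x j) (if j = 0 then zH m else hmap m n h (j - 1)) (if j < n - 1 then hmap m n h j else zH m)
            = A j (xcol m x j) (lcol m h j) (rcol m n h j)"
          using j lb[OF j(2)] by (simp add: FH_def XH_def hmap_def)
      qed
      moreover have "FH n A L (n - 1) (XH m n x (n - 1)) (if n - 1 = 0 then zH m else hmap m n h (n - 1 - 1)) (zH m)
          = L (xcol m x (n - 1)) (lcol m h (n - 1))"
        using lb[of "n - 1"] n by (simp add: FH_def XH_def)
      ultimately show ?thesis by simp
    qed
    finally show "(\<Prod>j<Suc (n - 1). FH n A L j (XH m n x j) (if j = 0 then zH m else hmap m n h (j - 1)) (if j < n - 1 then hmap m n h j else zH m))
        = (\<Prod>j<n - 1. A j (xcol m x j) (lcol m h j) (rcol m n h j)) * L (xcol m x (n - 1)) (lcol m h (n - 1))" .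
  qed
  finally show ?thesis by simp
qed


definition FV :: "(nat \<Rightarrow> nat \<Rightarrow> nat \<Rightarrow> nat \<Rightarrow> nat \<Rightarrow> nat \<Rightarrow> real) \<Rightarrow> nat \<Rightarrow> nat \<times> nat \<Rightarrow> nat \<Rightarrow> nat \<Rightarrow> real" where
  "FV G i pl u d = G i (fst pl) (snd pl) 0 u d"
definition PV :: "nat \<Rightarrow> peps \<Rightarrow> nat \<Rightarrow> (nat \<times> nat) set" where
  "PV n U i = {..<phys U i (n - 1)} \<times> {..<ldim U i (n - 1)}"
definition BV :: "nat \<Rightarrow> nat \<Rightarrow> peps \<Rightarrow> nat \<Rightarrow> nat set" where
  "BV m n U i = {..<ddim m U i (n - 1)}"
definition zp :: "nat \<Rightarrow> (nat \<Rightarrow> nat) \<Rightarrow> (nat \<Rightarrow> nat) \<Rightarrow> nat \<Rightarrow> nat \<times> nat" where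
  "zp m p c = (\<lambda>i\<in>{..<m}. (p i, c i))"

lemma sum_pairs: "(\<Sum>pl\<in>A \<times> B. f (fst pl) (snd pl)) = (\<Sum>a\<in>A. \<Sum>b\<in>B. f a b)"
  by (subst sum.cartesian_product) (simp add: case_prod_beta)

lemma finite_PV[simp]: "finite (PV n U i)" by (simp add: PV_def)
lemma finite_BV[simp]: "finite (BV m n U i)" by (simp add: BV_def)

lemma V1:
  assumes m: "1 \<le> m"
  shows "(\<Sum>v\<in>vbonds_col m U (n - 1). \<Prod>i<m. G i (xc i) (l i) 0 (cu v i) (cd m v i))
       = pre (FV G) (BV m n U) 0 m (zp m xc l) 0"
proof -
  have e: "m = Suc (m - 1)" using m by simp
  have VB: "vbonds_col m U (n - 1) = Pi\<^sub>E {..<m - 1} (BV m n U)"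
    unfolding vbonds_col_def BV_def by (rule PiE_cong) (auto simp: ddim_def)
  have "pre (FV G) (BV m n U) 0 m (zp m xc l) 0 =
     (\<Sum>bs\<in>Pi\<^sub>E {..<m - 1} (BV m n U). \<Prod>i<Suc (m - 1). FV G i (zp m xc l i) (if i = 0 then 0 else bs (i - 1)) (if i < m - 1 then bs i else 0))"
    by (subst e) (simp only: pre_explicit diff_Suc_1)
  also have "\<dots> = (\<Sum>v\<in>vbonds_col m U (n - 1). \<Prod>i<m. G i (xc i) (l i) 0 (cu v i) (cd m v i))"
    unfolding VB
  proof (intro sum.cong refl)
    fix bs
    show "(\<Prod>i<Suc (m - 1). FV G i (zp m xc l i) (if i = 0 then 0 else bs (i - 1)) (if i < m - 1 then bs i else 0))
       = (\<Prod>i<m. G i (xc i) (l i) 0 (cu bs i) (cd m bs i))"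
      unfolding e[symmetric]
    proof (intro prod.cong refl)
      fix i assume "i \<in> {..<m}"
      then have i: "i < m" by simp
      have "(i < m - 1) = (i + 1 < m)" by auto
      then show "FV G i (zp m xc l i) (if i = 0 then 0 else bs (i - 1)) (if i < m - 1 then bs i else 0) = G i (xc i) (l i) 0 (cu bs i) (cd m bs i)"
        using i by (simp add: FV_def zp_def cu_def cd_def)
    qed
  qed
  finally show ?thesis by simp
qed

lemma last_col_V:
  assumes m: "1 \<le> m"
  shows "last_col m n U \<delta> xc l = pre (FV (\<lambda>i p l r u d. node U i (n - 1) p l r u d + \<delta> i p l r u d)) (BV m n U) 0 m (zp m xc l) 0"
  unfolding last_col_def by (rule V1[OF m])

lemma XH_sum:
  "(\<Sum>x\<in>physIdx m n U. f (XH m n x)) = (\<Sum>X\<in>Pi\<^sub>E {..<n} (physC m U). f X)"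
proof (rule sum.reindex_bij_witness[of _ "xunmap m n" "XH m n"])
  fix x assume x: "x \<in> physIdx m n U"
  show "XH m n x \<in> Pi\<^sub>E {..<n} (physC m U)"
  proof (rule PiE_I)
    fix j assume "j \<in> {..<n}" then show "XH m n x j \<in> physC m U j" using xcol_in[OF x] by (simp add: XH_def)
  next
    fix j assume "j \<notin> {..<n}" then show "XH m n x j = undefined" by (simp add: XH_def)
  qed
  show "xunmap m n (XH m n x) = x"
  proof
    fix ij :: "nat \<times> nat"
    obtain i j where ij: "ij = (i, j)" by force
    show "xunmap m n (XH m n x) ij = x ij"
    proof (cases "i < m \<and> j < n")
      case True then show ?thesis by (simp add: ij xunmap_def XH_def xcol_def)
    next
      case False
      then have nin: "(i, j) \<notin> {..<m} \<times> {..<n}" by simp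
      have "x (i, j) = undefined" using PiE_arb[OF x[unfolded physIdx_def] nin] .
      then show ?thesis using False by (auto simp: ij xunmap_def)
    qed
  qed
next
  fix X assume X: "X \<in> Pi\<^sub>E {..<n} (physC m U)"
  show "XH m n (xunmap m n X) = X"
  proof
    fix j show "XH m n (xunmap m n X) j = X j"
    proof (cases "j < n")
      case True
      then have jn: "j \<in> {..<n}" by simp
      have Xj: "X j \<in> physC m U j" using PiE_mem[OF X jn] .
      show ?thesis
      proof
        fix i show "XH m n (xunmap m n X) j i = X j i"
        proof (cases "i < m")
          case True' : True
          then show ?thesis using True by (simp add: XH_def xcol_def xunmap_def)
        next
          case False
          then have "i \<notin> {..<m}" by simp
          then have "X j i = undefined" using PiE_arb[OF Xj[unfolded physC_def]] by simp
          then show ?thesis using True False by (simp add: XH_def xcol_def)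
        qed
      qed
    next
      case False
      then have "j \<notin> {..<n}" by simp
      then show ?thesis using PiE_arb[OF X] False by (simp add: XH_def)
    qed
  qed
  show "xunmap m n X \<in> physIdx m n U"
    unfolding physIdx_def
  proof (rule PiE_I)
    fix ij assume ij: "ij \<in> {..<m} \<times> {..<n}"
    obtain i j where e0: "ij = (i, j)" by force
    then have e: "i < m" "j < n" using ij by auto
    have jn: "j \<in> {..<n}" using e by simp
    have Xj: "X j \<in> physC m U j" using PiE_mem[OF X jn] .
    have im: "i \<in> {..<m}" using e by simp
    have "X j i \<in> {..<phys U i j}" using PiE_mem[OF Xj[unfolded physC_def] im] .
    then show "xunmap m n X ij \<in> (case ij of (i, j) \<Rightarrow> {..<phys U i j})" using e e0 by (simp add: xunmap_def)
  next
    fix ij assume ij: "ij \<notin> {..<m} \<times> {..<n}"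
    obtain i j where e: "ij = (i, j)" by force
    show "xunmap m n X ij = undefined" using ij e by (auto simp: xunmap_def)
  qed
qed (simp)

lemma zp_sum:
  "(\<Sum>p\<in>physC m U (n - 1). \<Sum>c\<in>leftC m U (n - 1). f (zp m p c)) = (\<Sum>q\<in>Pi\<^sub>E {..<m} (PV n U). f q)"
proof -
  have "(\<Sum>p\<in>physC m U (n - 1). \<Sum>c\<in>leftC m U (n - 1). f (zp m p c)) = (\<Sum>(p, c)\<in>physC m U (n - 1) \<times> leftC m U (n - 1). f (zp m p c))"
    by (rule sum.cartesian_product)
  also have "\<dots> = (\<Sum>q\<in>Pi\<^sub>E {..<m} (PV n U). f q)"
  proof (rule sum.reindex_bij_witness[of _ "\<lambda>q. (\<lambda>i\<in>{..<m}. fst (q i), \<lambda>i\<in>{..<m}. snd (q i))" "\<lambda>(p, c). zp m p c"])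
    fix pc assume pc: "pc \<in> physC m U (n - 1) \<times> leftC m U (n - 1)"
    obtain p c where e: "pc = (p, c)" by force
    have p: "p \<in> physC m U (n - 1)" and c: "c \<in> leftC m U (n - 1)" using pc e by auto
    have "(\<lambda>i\<in>{..<m}. fst (zp m p c i)) = p"
    proof
      fix i show "(\<lambda>i\<in>{..<m}. fst (zp m p c i)) i = p i"
        using PiE_arb[OF p[unfolded physC_def], of i] by (cases "i < m") (simp_all add: zp_def)
    qed
    moreover have "(\<lambda>i\<in>{..<m}. snd (zp m p c i)) = c"
    proof
      fix i show "(\<lambda>i\<in>{..<m}. snd (zp m p c i)) i = c i"
        using PiE_arb[OF c[unfolded leftC_def], of i] by (cases "i < m") (simp_all add: zp_def)
    qed
    ultimately show "(\<lambda>i\<in>{..<m}. fst ((case pc of (p, c) \<Rightarrow> zp m p c) i), \<lambda>i\<in>{..<m}. snd ((case pc of (p, c) \<Rightarrow> zp m p c) i)) = pc"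
      using e by simp
    show "(case pc of (p, c) \<Rightarrow> zp m p c) \<in> Pi\<^sub>E {..<m} (PV n U)"
    proof (rule PiE_I)
      fix i assume i: "i \<in> {..<m}"
      have "p i \<in> {..<phys U i (n - 1)}" using PiE_mem[OF p[unfolded physC_def] i] .
      moreover have "c i \<in> {..<ldim U i (n - 1)}" using PiE_mem[OF c[unfolded leftC_def] i] .
      ultimately show "(case pc of (p, c) \<Rightarrow> zp m p c) i \<in> PV n U i" using i e by (simp add: zp_def PV_def)
    next
      fix i assume "i \<notin> {..<m}" then show "(case pc of (p, c) \<Rightarrow> zp m p c) i = undefined" using e by (simp add: zp_def)
    qed
    show "f (case pc of (p, c) \<Rightarrow> zp m p c) = (case pc of (p, c) \<Rightarrow> f (zp m p c))" using e by simp
  next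
    fix q assume q: "q \<in> Pi\<^sub>E {..<m} (PV n U)"
    show "(case (\<lambda>i\<in>{..<m}. fst (q i), \<lambda>i\<in>{..<m}. snd (q i)) of (p, c) \<Rightarrow> zp m p c) = q"
    proof
      fix i show "(case (\<lambda>i\<in>{..<m}. fst (q i), \<lambda>i\<in>{..<m}. snd (q i)) of (p, c) \<Rightarrow> zp m p c) i = q i"
        using PiE_arb[OF q, of i] by (cases "i < m") (simp_all add: zp_def)
    qed
    have "(\<lambda>i\<in>{..<m}. fst (q i)) \<in> physC m U (n - 1)"
      unfolding physC_def
    proof (rule PiE_I)
      fix i assume i: "i \<in> {..<m}"
      show "(\<lambda>i\<in>{..<m}. fst (q i)) i \<in> {..<phys U i (n - 1)}" using PiE_mem[OF q i] i by (auto simp: PV_def)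
    qed simp
    moreover have "(\<lambda>i\<in>{..<m}. snd (q i)) \<in> leftC m U (n - 1)"
      unfolding leftC_def
    proof (rule PiE_I)
      fix i assume i: "i \<in> {..<m}"
      show "(\<lambda>i\<in>{..<m}. snd (q i)) i \<in> {..<ldim U i (n - 1)}" using PiE_mem[OF q i] i by (auto simp: PV_def)
    qed simp
    ultimately show "(\<lambda>i\<in>{..<m}. fst (q i), \<lambda>i\<in>{..<m}. snd (q i)) \<in> physC m U (n - 1) \<times> leftC m U (n - 1)" by simp
  qed
  finally show ?thesis .
qed

lemma leftC_0: "leftC m U 0 = {zH m}"
  unfolding leftC_def zH_def by (subst PiE_eq_singleton) (auto simp: ldim_def)

lemma rightC_last: "1 \<le> n \<Longrightarrow> rightC m n U (n - 1) = {zH m}"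
  unfolding rightC_def zH_def by (subst PiE_eq_singleton) (auto simp: rdim_def)

lemma LbH: "j < n \<Longrightarrow> Lb (rightC m n U) (zH m) j = leftC m U j"
proof (cases "j = 0")
  case True then show ?thesis by (simp add: Lb_def leftC_0)
next
  case False
  assume "j < n"
  then show ?thesis using False unfolding Lb_def rightC_def leftC_def
    by (simp, intro PiE_cong) (auto simp: rdim_def ldim_def)
qed

lemma LbV: "i < m \<Longrightarrow> Lb (BV m n U) 0 i = {..<udim U i (n - 1)}"
  by (cases "i = 0") (auto simp: Lb_def BV_def udim_def ddim_def)

lemma BV_last: "1 \<le> m \<Longrightarrow> BV m n U (m - 1) = {0}"
  by (auto simp: BV_def ddim_def)

lemma isoH:
  assumes cc: "col_canonical m n U" and j: "j < n - 1"
    and A: "\<And>j. j < n - 1 \<Longrightarrow> A j = col_tensor m n U j"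
  shows "iso (FH n A L) (physC m U) (rightC m n U) (zH m) j"
  unfolding iso_def
proof (intro ballI)
  fix b b' assume b: "b \<in> rightC m n U j" "b' \<in> rightC m n U j"
  have "Lb (rightC m n U) (zH m) j = leftC m U j" using j by (intro LbH) simp
  then show "(\<Sum>p\<in>physC m U j. \<Sum>a\<in>Lb (rightC m n U) (zH m) j. FH n A L j p a b * FH n A L j p a b') = (if b = b' then 1 else 0)"
    using cc j b A[OF j] unfolding col_canonical_def by (simp add: FH_def)
qed

lemma isoV:
  assumes lc: "last_canonical m n U" and i: "i < m - 1"
  shows "iso (FV (\<lambda>i p l r u d. node U i (n - 1) p l r u d)) (PV n U) (BV m n U) 0 i"
  unfolding iso_def
proof (intro ballI)
  fix d d' assume d: "d \<in> BV m n U i" "d' \<in> BV m n U i"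
  have L: "Lb (BV m n U) 0 i = {..<udim U i (n - 1)}" using i by (intro LbV) simp
  have i1: "i + 1 < m" using i by simp
  have dd: "d < vdim U i (n - 1)" "d' < vdim U i (n - 1)" using d i1 by (auto simp: BV_def ddim_def)
  have "(\<Sum>pl\<in>PV n U i. \<Sum>u\<in>{..<udim U i (n - 1)}. FV (\<lambda>i p l r u d. node U i (n - 1) p l r u d) i pl u d * FV (\<lambda>i p l r u d. node U i (n - 1) p l r u d) i pl u d')
      = (\<Sum>p<phys U i (n - 1). \<Sum>l<ldim U i (n - 1). \<Sum>u<udim U i (n - 1). node U i (n - 1) p l 0 u d * node U i (n - 1) p l 0 u d')"
    unfolding PV_def FV_def by (rule sum_pairs)
  also have "\<dots> = (if d = d' then 1 else 0)"
    using lc i dd unfolding last_canonical_def by simp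
  finally show "(\<Sum>pl\<in>PV n U i. \<Sum>u\<in>Lb (BV m n U) 0 i. FV (\<lambda>i p l r u d. node U i (n - 1) p l r u d) i pl u d * FV (\<lambda>i p l r u d. node U i (n - 1) p l r u d) i pl u d') = (if d = d' then 1 else 0)"
    using L by simp
qed

lemma FH_upd: "k < n - 1 \<Longrightarrow> FH n (A(k := D)) L = (FH n A L)(k := D)"
  by (auto simp: FH_def fun_eq_iff)

lemma pre_FH_last: "1 \<le> n \<Longrightarrow> pre (FH n A L') B z n X b = pre ((FH n A L)(n - 1 := (\<lambda>p a b. L' p a))) B z n X b"
  by (rule pre_cong) (auto simp: FH_def fun_eq_iff)

lemma FV_upd: "FV (G(i := D)) = (FV G)(i := (\<lambda>pl u d. D (fst pl) (snd pl) 0 u d))"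
  by (auto simp: FV_def fun_eq_iff)


definition N0 :: "nat \<Rightarrow> peps \<Rightarrow> nat \<Rightarrow> nat \<Rightarrow> nat \<Rightarrow> nat \<Rightarrow> nat \<Rightarrow> nat \<Rightarrow> real" where
  "N0 n U = (\<lambda>i p l r u d. node U i (n - 1) p l r u d)"
definition VV :: "nat \<Rightarrow> nat \<Rightarrow> peps \<Rightarrow> (nat \<Rightarrow> nat \<Rightarrow> nat \<Rightarrow> nat \<Rightarrow> nat \<Rightarrow> nat \<Rightarrow> real) \<Rightarrow> (nat \<Rightarrow> nat \<times> nat) \<Rightarrow> real" where
  "VV m n U G q = pre (FV G) (BV m n U) 0 m q 0"
definition L0 :: "nat \<Rightarrow> nat \<Rightarrow> peps \<Rightarrow> (nat \<Rightarrow> nat) \<Rightarrow> (nat \<Rightarrow> nat) \<Rightarrow> real" where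
  "L0 m n U p c = VV m n U (N0 n U) (zp m p c)"
definition F0 :: "nat \<Rightarrow> nat \<Rightarrow> peps \<Rightarrow> nat \<Rightarrow> (nat \<Rightarrow> nat) \<Rightarrow> (nat \<Rightarrow> nat) \<Rightarrow> (nat \<Rightarrow> nat) \<Rightarrow> real" where
  "F0 m n U = FH n (\<lambda>j. col_tensor m n U j) (L0 m n U)"
definition CH :: "nat \<Rightarrow> nat \<Rightarrow> peps \<Rightarrow> (nat \<Rightarrow> (nat \<Rightarrow> nat) \<Rightarrow> (nat \<Rightarrow> nat) \<Rightarrow> (nat \<Rightarrow> nat) \<Rightarrow> real) \<Rightarrow> (nat \<Rightarrow> nat \<Rightarrow> nat) \<Rightarrow> real" where
  "CH m n U F X = pre F (rightC m n U) (zH m) n X (zH m)"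
definition nC2 :: "nat \<Rightarrow> nat \<Rightarrow> peps \<Rightarrow> real" where
  "nC2 m n U = (\<Sum>X\<in>Pi\<^sub>E {..<n} (physC m U). (CH m n U (F0 m n U) X)\<^sup>2)"
definition nV2 :: "nat \<Rightarrow> nat \<Rightarrow> peps \<Rightarrow> real" where
  "nV2 m n U = (\<Sum>q\<in>Pi\<^sub>E {..<m} (PV n U). (VV m n U (N0 n U) q)\<^sup>2)"

lemma fin_rightC: "\<And>j. finite (rightC m n U j)" by simp
lemma fin_physC: "\<And>j. finite (physC m U j)" by simp
lemma fin_BV: "\<And>j. finite (BV m n U j)" by simp
lemma fin_PV: "\<And>j. finite (PV n U j)" by simp

context
  fixes m n :: nat and U :: peps
  assumes m: "1 \<le> m" and n: "1 \<le> n" and cc: "col_canonical m n U" and lc: "last_canonical m n U"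
begin

lemma isoF0: "j < n - 1 \<Longrightarrow> iso (F0 m n U) (physC m U) (rightC m n U) (zH m) j"
  unfolding F0_def by (rule isoH[OF cc]) auto

lemma isoV0: "i < m - 1 \<Longrightarrow> iso (FV (N0 n U)) (PV n U) (BV m n U) 0 i"
  unfolding N0_def by (rule isoV[OF lc])

lemma E1:
  assumes k: "k < n - 1"
  shows "(\<Sum>X\<in>Pi\<^sub>E {..<n} (physC m U). (CH m n U ((F0 m n U)(k := D)) X)\<^sup>2)
     \<le> (cshape_norm m n U k D)\<^sup>2 * nC2 m n U"
proof -
  define r where "r = n - 1 - k"
  have nr: "n = k + Suc r" "n = Suc k + r" and r0: "0 < r" using k by (auto simp: r_def)
  have ze: "zH m \<in> rightC m n U (k + r)" using rightC_last[OF n] nr by simp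
  have "(\<Sum>X\<in>Pi\<^sub>E {..<n} (physC m U). (CH m n U ((F0 m n U)(k := D)) X)\<^sup>2)
     \<le> (\<Sum>p\<in>physC m U k. \<Sum>c\<in>Lb (rightC m n U) (zH m) k. \<Sum>d\<in>rightC m n U k. (D p c d)\<^sup>2) *
        (\<Sum>w\<in>Pi\<^sub>E {..<r} (shft (physC m U) (Suc k)). \<Sum>d\<in>rightC m n U k.
           (pre (shft (F0 m n U) (Suc k)) (shft (rightC m n U) (Suc k)) d r w (zH m))\<^sup>2)"
  proof -
    have isok: "\<And>j. j < k \<Longrightarrow> iso (F0 m n U) (physC m U) (rightC m n U) (zH m) j" using isoF0 k by auto
    show ?thesis using G1[OF fin_rightC fin_physC isok ze, of D] unfolding CH_def by (simp only: nr(1)[symmetric])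
  qed
  also have "(\<Sum>w\<in>Pi\<^sub>E {..<r} (shft (physC m U) (Suc k)). \<Sum>d\<in>rightC m n U k.
           (pre (shft (F0 m n U) (Suc k)) (shft (rightC m n U) (Suc k)) d r w (zH m))\<^sup>2) = nC2 m n U"
  proof -
    have "nC2 m n U = (\<Sum>w\<in>Pi\<^sub>E {..<r} (shft (physC m U) (Suc k)). \<Sum>c\<in>Lb (rightC m n U) (zH m) (Suc k).
           (pre (shft (F0 m n U) (Suc k)) (shft (rightC m n U) (Suc k)) c r w (zH m))\<^sup>2)"
    proof -
      have isok: "\<And>j. j < Suc k \<Longrightarrow> iso (F0 m n U) (physC m U) (rightC m n U) (zH m) j" using isoF0 k by auto
      show ?thesis using G2[OF fin_rightC fin_physC isok, where s="Suc k" and r=r and zend="zH m"] r0 unfolding nC2_def CH_def by (simp only: nr(2)[symmetric] simp_thms)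
    qed
    then show ?thesis by (simp add: Lb_def)
  qed
  also have "(\<Sum>p\<in>physC m U k. \<Sum>c\<in>Lb (rightC m n U) (zH m) k. \<Sum>d\<in>rightC m n U k. (D p c d)\<^sup>2) = (cshape_norm m n U k D)\<^sup>2"
    using LbH[of k n m U] k unfolding cshape_norm_def by (simp add: sum_nonneg)
  finally show ?thesis by (simp only: mult.commute)
qed

lemma E_last:
  "(\<Sum>X\<in>Pi\<^sub>E {..<n} (physC m U). (CH m n U ((F0 m n U)(n - 1 := (\<lambda>p a b. V p a))) X)\<^sup>2)
     \<le> (\<Sum>p\<in>physC m U (n - 1). \<Sum>c\<in>leftC m U (n - 1). (V p c)\<^sup>2)"
proof -
  have nr: "n = (n - 1) + Suc 0" using n by simp
  have ze: "zH m \<in> rightC m n U ((n - 1) + 0)" using rightC_last[OF n] by simp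
  have isok: "\<And>j. j < n - 1 \<Longrightarrow> iso (F0 m n U) (physC m U) (rightC m n U) (zH m) j" using isoF0 by auto
  have "(\<Sum>X\<in>Pi\<^sub>E {..<n} (physC m U). (CH m n U ((F0 m n U)(n - 1 := (\<lambda>p a b. V p a))) X)\<^sup>2)
     \<le> (\<Sum>p\<in>physC m U (n - 1). \<Sum>c\<in>Lb (rightC m n U) (zH m) (n - 1). \<Sum>d\<in>rightC m n U (n - 1). (V p c)\<^sup>2) *
        (\<Sum>w\<in>Pi\<^sub>E {..<0} (shft (physC m U) (Suc (n - 1))). \<Sum>d\<in>rightC m n U (n - 1).
           (pre (shft (F0 m n U) (Suc (n - 1))) (shft (rightC m n U) (Suc (n - 1))) d 0 w (zH m))\<^sup>2)"
    using G1[OF fin_rightC fin_physC isok ze, of "\<lambda>p a b. V p a"] unfolding CH_def by (simp only: nr[symmetric])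
  also have "\<dots> = (\<Sum>p\<in>physC m U (n - 1). \<Sum>c\<in>leftC m U (n - 1). (V p c)\<^sup>2)"
  proof -
    have R: "rightC m n U (n - Suc 0) = {zH m}" using rightC_last[OF n] by simp
    show ?thesis using LbH[of "n - 1" n m U] n by (simp add: R)
  qed
  finally show ?thesis .
qed

lemma nC2_L0: "nC2 m n U = (\<Sum>p\<in>physC m U (n - 1). \<Sum>c\<in>leftC m U (n - 1). (L0 m n U p c)\<^sup>2)"
proof -
  have nr: "n = (n - 1) + 1" using n by simp
  have isok: "\<And>j. j < n - 1 \<Longrightarrow> iso (F0 m n U) (physC m U) (rightC m n U) (zH m) j" using isoF0 by auto
  have "nC2 m n U = (\<Sum>w\<in>Pi\<^sub>E {..<1} (shft (physC m U) (n - 1)). \<Sum>c\<in>Lb (rightC m n U) (zH m) (n - 1).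
           (pre (shft (F0 m n U) (n - 1)) (shft (rightC m n U) (n - 1)) c 1 w (zH m))\<^sup>2)"
    using G2[OF fin_rightC fin_physC isok, where s="n - 1" and r=1 and zend="zH m"] unfolding nC2_def CH_def
    by (simp only: nr[symmetric] simp_thms zero_less_one)
  also have "\<dots> = (\<Sum>w\<in>Pi\<^sub>E {..<Suc 0} (shft (physC m U) (n - 1)). \<Sum>c\<in>leftC m U (n - 1). (L0 m n U (w 0) c)\<^sup>2)"
  proof -
    have "pre (shft (F0 m n U) (n - 1)) (shft (rightC m n U) (n - 1)) c (Suc 0) w (zH m) = L0 m n U (w 0) c" for c w
      by (simp only: pre_one) (simp add: shft_def F0_def FH_def)
    then show ?thesis using LbH[of "n - 1" n m U] n by simp
  qed
  also have "\<dots> = (\<Sum>p\<in>physC m U (n - 1). \<Sum>c\<in>leftC m U (n - 1). (L0 m n U p c)\<^sup>2)"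
    by (subst sum_PiE_one) (simp add: shft_def)
  finally show ?thesis .
qed

lemma nC2_nV2: "nC2 m n U = nV2 m n U"
  unfolding nC2_L0 nV2_def L0_def by (rule zp_sum)

lemma nshape_sq:
  assumes i: "i < m"
  shows "(nshape_norm m n U i (n - 1) D)\<^sup>2 = (\<Sum>pl\<in>PV n U i. \<Sum>u\<in>Lb (BV m n U) 0 i. \<Sum>d\<in>BV m n U i. (D (fst pl) (snd pl) 0 u d)\<^sup>2)"
proof -
  have "(nshape_norm m n U i (n - 1) D)\<^sup>2 = (\<Sum>p<phys U i (n - 1). \<Sum>l<ldim U i (n - 1). \<Sum>r<rdim n U i (n - 1).
      \<Sum>u<udim U i (n - 1). \<Sum>d<ddim m U i (n - 1). (D p l r u d)\<^sup>2)"
    unfolding nshape_norm_def by (simp add: sum_nonneg)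
  also have "\<dots> = (\<Sum>p<phys U i (n - 1). \<Sum>l<ldim U i (n - 1). \<Sum>u<udim U i (n - 1). \<Sum>d<ddim m U i (n - 1). (D p l 0 u d)\<^sup>2)"
    using rdim_last[OF n] by simp
  also have "\<dots> = (\<Sum>pl\<in>PV n U i. \<Sum>u\<in>Lb (BV m n U) 0 i. \<Sum>d\<in>BV m n U i. (D (fst pl) (snd pl) 0 u d)\<^sup>2)"
    unfolding PV_def LbV[OF i] BV_def by (rule sum_pairs[symmetric])
  finally show ?thesis .
qed

lemma EV:
  assumes i: "i < m"
  shows "(\<Sum>q\<in>Pi\<^sub>E {..<m} (PV n U). (VV m n U ((N0 n U)(i := D)) q)\<^sup>2)
     \<le> (nshape_norm m n U i (n - 1) D)\<^sup>2 * (if i < m - 1 then nV2 m n U else 1)"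
proof -
  define r where "r = m - 1 - i"
  have nr: "m = i + Suc r" "m = Suc i + r" using i by (auto simp: r_def)
  have ze: "0 \<in> BV m n U (i + r)" using BV_last[OF m] nr by simp
  have isok: "\<And>j. j < i \<Longrightarrow> iso (FV (N0 n U)) (PV n U) (BV m n U) 0 j" using isoV0 i by auto
  let ?D = "\<lambda>pl u d. D (fst pl) (snd pl) 0 u d"
  have "(\<Sum>q\<in>Pi\<^sub>E {..<m} (PV n U). (VV m n U ((N0 n U)(i := D)) q)\<^sup>2)
     \<le> (\<Sum>p\<in>PV n U i. \<Sum>c\<in>Lb (BV m n U) 0 i. \<Sum>d\<in>BV m n U i. (?D p c d)\<^sup>2) *
        (\<Sum>w\<in>Pi\<^sub>E {..<r} (shft (PV n U) (Suc i)). \<Sum>d\<in>BV m n U i.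
           (pre (shft (FV (N0 n U)) (Suc i)) (shft (BV m n U) (Suc i)) d r w 0)\<^sup>2)"
    using G1[OF fin_BV fin_PV isok ze, of ?D] unfolding VV_def FV_upd by (simp only: nr(1)[symmetric])
  also have "(\<Sum>w\<in>Pi\<^sub>E {..<r} (shft (PV n U) (Suc i)). \<Sum>d\<in>BV m n U i.
           (pre (shft (FV (N0 n U)) (Suc i)) (shft (BV m n U) (Suc i)) d r w 0)\<^sup>2) = (if i < m - 1 then nV2 m n U else 1)"
  proof (cases "i < m - 1")
    case True
    then have r0: "0 < r" by (simp add: r_def)
    have isok': "\<And>j. j < Suc i \<Longrightarrow> iso (FV (N0 n U)) (PV n U) (BV m n U) 0 j" using isoV0 True by auto
    have "nV2 m n U = (\<Sum>w\<in>Pi\<^sub>E {..<r} (shft (PV n U) (Suc i)). \<Sum>c\<in>Lb (BV m n U) 0 (Suc i).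
           (pre (shft (FV (N0 n U)) (Suc i)) (shft (BV m n U) (Suc i)) c r w 0)\<^sup>2)"
      using G2[OF fin_BV fin_PV isok', where s="Suc i" and r=r and zend=0] r0 unfolding nV2_def VV_def
      by (simp only: nr(2)[symmetric] simp_thms)
    then show ?thesis using True by (simp add: Lb_def)
  next
    case False
    then have r0: "r = 0" "i = m - 1" using i by (auto simp: r_def)
    then show ?thesis using BV_last[OF m] by simp
  qed
  also have "(\<Sum>p\<in>PV n U i. \<Sum>c\<in>Lb (BV m n U) 0 i. \<Sum>d\<in>BV m n U i. (?D p c d)\<^sup>2) = (nshape_norm m n U i (n - 1) D)\<^sup>2"
    using nshape_sq[OF i] by simp
  finally show ?thesis .
qed

lemma nV2_last: "nV2 m n U = (nshape_norm m n U (m - 1) (n - 1) (N0 n U (m - 1)))\<^sup>2"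
proof -
  have nr: "m = (m - 1) + 1" using m by simp
  have isok: "\<And>j. j < m - 1 \<Longrightarrow> iso (FV (N0 n U)) (PV n U) (BV m n U) 0 j" using isoV0 by auto
  have "nV2 m n U = (\<Sum>w\<in>Pi\<^sub>E {..<1} (shft (PV n U) (m - 1)). \<Sum>c\<in>Lb (BV m n U) 0 (m - 1).
           (pre (shft (FV (N0 n U)) (m - 1)) (shft (BV m n U) (m - 1)) c 1 w 0)\<^sup>2)"
    using G2[OF fin_BV fin_PV isok, where s="m - 1" and r=1 and zend=0] unfolding nV2_def VV_def
    by (simp only: nr[symmetric] simp_thms zero_less_one)
  also have "\<dots> = (\<Sum>w\<in>Pi\<^sub>E {..<Suc 0} (shft (PV n U) (m - 1)). \<Sum>c\<in>Lb (BV m n U) 0 (m - 1). (FV (N0 n U) (m - 1) (w 0) c 0)\<^sup>2)"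
  proof -
    have "pre (shft (FV (N0 n U)) (m - 1)) (shft (BV m n U) (m - 1)) c (Suc 0) w 0 = FV (N0 n U) (m - 1) (w 0) c 0" for c w
      by (simp only: pre_one) (simp add: shft_def)
    then show ?thesis by simp
  qed
  also have "\<dots> = (\<Sum>pl\<in>PV n U (m - 1). \<Sum>c\<in>Lb (BV m n U) 0 (m - 1). (FV (N0 n U) (m - 1) pl c 0)\<^sup>2)"
    by (subst sum_PiE_one) (simp add: shft_def)
  also have "\<dots> = (nshape_norm m n U (m - 1) (n - 1) (N0 n U (m - 1)))\<^sup>2"
    using nshape_sq[of "m - 1" "N0 n U (m - 1)"] m BV_last[OF m] by (simp add: FV_def)
  finally show ?thesis .
qed

lemma cshape_A:
  assumes k: "k < n - 1"
  shows "(cshape_norm m n U k (col_tensor m n U k))\<^sup>2 = real (card (rightC m n U k))"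
proof -
  have "(cshape_norm m n U k (col_tensor m n U k))\<^sup>2 = (\<Sum>x\<in>physC m U k. \<Sum>l\<in>leftC m U k. \<Sum>r\<in>rightC m n U k. (col_tensor m n U k x l r)\<^sup>2)"
    unfolding cshape_norm_def by (simp add: sum_nonneg)
  also have "\<dots> = (\<Sum>r\<in>rightC m n U k. \<Sum>x\<in>physC m U k. \<Sum>l\<in>leftC m U k. col_tensor m n U k x l r * col_tensor m n U k x l r)"
    by (simp only: power2_eq_square, rule trans[OF swap3 swap3])
  also have "\<dots> = (\<Sum>r\<in>rightC m n U k. 1)"
    using cc k unfolding col_canonical_def by (intro sum.cong refl) simp
  finally show ?thesis by simp
qed

lemma nshape_N:
  assumes i: "i < m - 1"
  shows "(nshape_norm m n U i (n - 1) (N0 n U i))\<^sup>2 = real (vdim U i (n - 1))"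
proof -
  have im: "i < m" "i + 1 < m" using i by auto
  have "(nshape_norm m n U i (n - 1) (N0 n U i))\<^sup>2 = (\<Sum>pl\<in>PV n U i. \<Sum>u\<in>Lb (BV m n U) 0 i. \<Sum>d\<in>BV m n U i. (N0 n U i (fst pl) (snd pl) 0 u d)\<^sup>2)"
    by (rule nshape_sq[OF im(1)])
  also have "\<dots> = (\<Sum>d\<in>BV m n U i. \<Sum>pl\<in>PV n U i. \<Sum>u\<in>Lb (BV m n U) 0 i. FV (N0 n U) i pl u d * FV (N0 n U) i pl u d)"
    by (simp only: power2_eq_square FV_def, rule trans[OF swap3 swap3])
  also have "\<dots> = (\<Sum>d\<in>BV m n U i. 1)"
    using isoV0[OF i] unfolding iso_def by (intro sum.cong refl) simp
  finally show ?thesis using im by (simp add: BV_def ddim_def)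
qed

end


definition Lsum :: "nat \<Rightarrow> nat \<Rightarrow> peps \<Rightarrow> (nat \<Rightarrow> nat \<Rightarrow> nat \<Rightarrow> nat \<Rightarrow> nat \<Rightarrow> nat \<Rightarrow> real) \<Rightarrow> (nat \<Rightarrow> nat) \<Rightarrow> (nat \<Rightarrow> nat) \<Rightarrow> real" where
  "Lsum m n U G xc l = (\<Sum>v\<in>vbonds_col m U (n - 1). \<Prod>i<m. G i (xc i) (l i) 0 (cu v i) (cd m v i))"

definition Hsum :: "nat \<Rightarrow> nat \<Rightarrow> peps \<Rightarrow> (nat \<Rightarrow> (nat \<Rightarrow> nat) \<Rightarrow> (nat \<Rightarrow> nat) \<Rightarrow> (nat \<Rightarrow> nat) \<Rightarrow> real) \<Rightarrow> ((nat \<Rightarrow> nat) \<Rightarrow> (nat \<Rightarrow> nat) \<Rightarrow> real) \<Rightarrow> (nat \<times> nat \<Rightarrow> nat) \<Rightarrow> real" where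
  "Hsum m n U A L x = (\<Sum>h\<in>hbonds m n U. (\<Prod>j<n - 1. A j (xcol m x j) (lcol m h j) (rcol m n h j)) * L (xcol m x (n - 1)) (lcol m h (n - 1)))"

lemma alg_bound:
  fixes P Q S Ld L0 V e al be ga et ka mu :: real
  assumes "\<bar>P - Q - S\<bar> \<le> al * e\<^sup>2" "\<bar>Ld\<bar> \<le> be" "\<bar>S\<bar> \<le> ga * e" "\<bar>Ld - L0\<bar> \<le> et * e" "\<bar>Q\<bar> \<le> ka" "\<bar>Ld - L0 - V\<bar> \<le> mu * e\<^sup>2"
    and "0 \<le> e"
  shows "\<bar>P * Ld - Q * L0 - S * L0 - Q * V\<bar> \<le> (al * be + ga * et + ka * mu) * e\<^sup>2"
proof -
  have eq: "P * Ld - Q * L0 - S * L0 - Q * V = (P - Q - S) * Ld + S * (Ld - L0) + Q * (Ld - L0 - V)"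
    by (simp add: algebra_simps)
  have "\<bar>(P - Q - S) * Ld\<bar> \<le> (al * e\<^sup>2) * be" unfolding abs_mult
    using assms by (intro mult_mono) auto
  moreover have "\<bar>S * (Ld - L0)\<bar> \<le> (ga * e) * (et * e)" unfolding abs_mult
    using assms by (intro mult_mono) auto
  moreover have "\<bar>Q * (Ld - L0 - V)\<bar> \<le> ka * (mu * e\<^sup>2)" unfolding abs_mult
    using assms by (intro mult_mono) auto
  ultimately have "\<bar>P * Ld - Q * L0 - S * L0 - Q * V\<bar> \<le> (al * e\<^sup>2) * be + (ga * e) * (et * e) + ka * (mu * e\<^sup>2)"
    unfolding eq by (smt (verit) abs_triangle_ineq)
  then show ?thesis by (simp add: algebra_simps power2_eq_square)
qed

lemma prod_upd_remove:
  assumes "finite J" "k \<in> J"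
  shows "(\<Prod>j\<in>J. (f(k := g)) j) = g * (\<Prod>j\<in>J - {k}. f j)"
proof -
  have "(\<Prod>j\<in>J. (f(k := g)) j) = (f(k := g)) k * (\<Prod>j\<in>J - {k}. (f(k := g)) j)"
    using assms by (rule prod.remove)
  also have "(\<Prod>j\<in>J - {k}. (f(k := g)) j) = (\<Prod>j\<in>J - {k}. f j)" by (intro prod.cong) auto
  finally show ?thesis by simp
qed


definition FOk :: "nat \<Rightarrow> nat \<Rightarrow> peps \<Rightarrow> (nat \<Rightarrow> (nat \<Rightarrow> nat) \<Rightarrow> (nat \<Rightarrow> nat) \<Rightarrow> (nat \<Rightarrow> nat) \<Rightarrow> real) \<Rightarrow> nat \<Rightarrow> (nat \<times> nat \<Rightarrow> nat) \<Rightarrow> real" where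
  "FOk m n U \<Delta> k x = CH m n U ((F0 m n U)(k := \<Delta> k)) (XH m n x)"
definition FOd :: "nat \<Rightarrow> nat \<Rightarrow> peps \<Rightarrow> (nat \<Rightarrow> nat \<Rightarrow> nat \<Rightarrow> nat \<Rightarrow> nat \<Rightarrow> nat \<Rightarrow> real) \<Rightarrow> nat \<Rightarrow> (nat \<times> nat \<Rightarrow> nat) \<Rightarrow> real" where
  "FOd m n U \<delta> i x = CH m n U ((F0 m n U)(n - 1 := (\<lambda>p a b. VV m n U ((N0 n U)(i := \<delta> i)) (zp m p a)))) (XH m n x)"

definition KR :: "nat \<Rightarrow> nat \<Rightarrow> peps \<Rightarrow> real" where
  "KR m n U = (let Cp = (\<Prod>j<n - 1. cshape_norm m n U j (col_tensor m n U j));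
                  Cv = (\<Prod>i<m. nshape_norm m n U i (n - 1) (N0 n U i));
                  NH = real (n - 1); NV = real (card (vbonds_col m U (n - 1))) in
     real (card (hbonds m n U)) *
      ((NH\<^sup>2 * 2 ^ (n - 1) * Cp) * (NV * 2 ^ m * Cv) + (NH * Cp) * (NV * Cv * (real m + real m ^ 2 * 2 ^ m))
        + Cp * (NV * real m ^ 2 * 2 ^ m * Cv)))"

lemma vert_bounds:
  fixes nn dd :: "nat \<Rightarrow> real" and cN :: "nat \<Rightarrow> real" and e :: real
  assumes nn: "\<And>i. i < m \<Longrightarrow> \<bar>nn i\<bar> \<le> cN i" and dd: "\<And>i. i < m \<Longrightarrow> \<bar>dd i\<bar> \<le> e * cN i"
    and e: "0 \<le> e" "e \<le> 1"
  shows "\<bar>\<Prod>i<m. nn i + dd i\<bar> \<le> 2 ^ m * (\<Prod>i<m. cN i)"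
    and "\<bar>(\<Prod>i<m. nn i + dd i) - (\<Prod>i<m. nn i)\<bar> \<le> (real m + real m ^ 2 * 2 ^ m) * (\<Prod>i<m. cN i) * e"
    and "\<bar>(\<Prod>i<m. nn i + dd i) - (\<Prod>i<m. nn i) - FO1 {..<m} nn dd\<bar> \<le> real m ^ 2 * 2 ^ m * (\<Prod>i<m. cN i) * e\<^sup>2"
proof -
  have c0: "0 \<le> (\<Prod>i<m. cN i)" using nn by (intro prod_nonneg) (meson abs_ge_zero lessThan_iff order_trans)
  have pw: "(1 + e) ^ m \<le> 2 ^ m" by (rule power_mono) (use e in auto)
  have "\<bar>\<Prod>i<m. nn i + dd i\<bar> \<le> (1 + e) ^ card {..<m} * (\<Prod>i<m. cN i)"
    by (rule prod_pert_bound) (use nn dd e in auto)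
  also have "\<dots> \<le> 2 ^ m * (\<Prod>i<m. cN i)" using pw c0 by (simp add: mult_right_mono)
  finally show "\<bar>\<Prod>i<m. nn i + dd i\<bar> \<le> 2 ^ m * (\<Prod>i<m. cN i)" .
  have R: "\<bar>(\<Prod>i<m. nn i + dd i) - (\<Prod>i<m. nn i) - FO1 {..<m} nn dd\<bar> \<le> real (card {..<m})^2 * e^2 * ((1 + e) ^ card {..<m} * (\<Prod>i<m. cN i))"
    by (rule rem_bound) (use nn dd e in auto)
  also have "\<dots> \<le> real m ^ 2 * 2 ^ m * (\<Prod>i<m. cN i) * e\<^sup>2"
  proof -
    have "real m ^ 2 * e^2 * ((1 + e) ^ m * (\<Prod>i<m. cN i)) \<le> real m ^ 2 * e^2 * (2 ^ m * (\<Prod>i<m. cN i))"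
      using pw c0 by (intro mult_left_mono mult_right_mono) auto
    then show ?thesis by (simp add: mult_ac)
  qed
  finally show R': "\<bar>(\<Prod>i<m. nn i + dd i) - (\<Prod>i<m. nn i) - FO1 {..<m} nn dd\<bar> \<le> real m ^ 2 * 2 ^ m * (\<Prod>i<m. cN i) * e\<^sup>2" .
  have F: "\<bar>FO1 {..<m} nn dd\<bar> \<le> real (card {..<m}) * e * (\<Prod>i<m. cN i)"
    by (rule FO1_bound) (use nn dd e in auto)
  have "\<bar>(\<Prod>i<m. nn i + dd i) - (\<Prod>i<m. nn i)\<bar> \<le> \<bar>FO1 {..<m} nn dd\<bar> + \<bar>(\<Prod>i<m. nn i + dd i) - (\<Prod>i<m. nn i) - FO1 {..<m} nn dd\<bar>"
    by linarith
  also have "\<dots> \<le> real m * e * (\<Prod>i<m. cN i) + real m ^ 2 * 2 ^ m * (\<Prod>i<m. cN i) * e\<^sup>2"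
    using F R' by simp
  also have "\<dots> \<le> real m * e * (\<Prod>i<m. cN i) + real m ^ 2 * 2 ^ m * (\<Prod>i<m. cN i) * e"
  proof -
    have "e\<^sup>2 \<le> e" using e by (simp add: power2_eq_square mult_left_le_one_le)
    then show ?thesis using c0 by (intro add_left_mono mult_left_mono) auto
  qed
  also have "\<dots> = (real m + real m ^ 2 * 2 ^ m) * (\<Prod>i<m. cN i) * e" by (simp add: algebra_simps)
  finally show "\<bar>(\<Prod>i<m. nn i + dd i) - (\<Prod>i<m. nn i)\<bar> \<le> (real m + real m ^ 2 * 2 ^ m) * (\<Prod>i<m. cN i) * e" .
qed


context
  fixes m n :: nat and U :: peps
  assumes m: "1 \<le> m" and n: "1 \<le> n"
begin

lemma Lsum_VV: "Lsum m n U G p c = VV m n U G (zp m p c)"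
  unfolding Lsum_def VV_def by (rule V1[OF m])

lemma L0_Lsum: "L0 m n U p c = Lsum m n U (N0 n U) p c"
  by (simp add: L0_def Lsum_VV)

lemma CH_Hsum: "CH m n U (FH n A L) (XH m n x) = Hsum m n U A L x"
  unfolding CH_def Hsum_def by (rule H1[OF n, symmetric])

lemma contr_Hsum: "contraction m n U x = Hsum m n U (\<lambda>j. col_tensor m n U j) (L0 m n U) x"
proof -
  have "last_col m n U (\<lambda>_ _ _ _ _ _. 0) p c = L0 m n U p c" for p c
    unfolding L0_Lsum last_col_def Lsum_def N0_def by simp
  then show ?thesis
    using pert0_eq[OF n, of m U x, symmetric] unfolding pert_contraction_def Hsum_def by simp
qed

lemma contr_CH: "contraction m n U x = CH m n U (F0 m n U) (XH m n x)"
  unfolding contr_Hsum F0_def CH_Hsum ..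

lemma pert_Hsum: "pert_contraction m n U \<Delta> \<delta> x = Hsum m n U (\<lambda>j p a b. col_tensor m n U j p a b + \<Delta> j p a b)
   (Lsum m n U (\<lambda>i p l r u d. N0 n U i p l r u d + \<delta> i p l r u d)) x"
  unfolding pert_contraction_def Hsum_def last_col_def Lsum_def N0_def ..

lemma FOk_Hsum: "k < n - 1 \<Longrightarrow> FOk m n U \<Delta> k x = Hsum m n U ((\<lambda>j. col_tensor m n U j)(k := \<Delta> k)) (L0 m n U) x"
  unfolding FOk_def F0_def by (simp only: FH_upd[symmetric] CH_Hsum)

lemma FOd_Hsum: "FOd m n U \<delta> i x = Hsum m n U (\<lambda>j. col_tensor m n U j) (Lsum m n U ((N0 n U)(i := \<delta> i))) x"
proof -
  have "FOd m n U \<delta> i x = CH m n U (FH n (\<lambda>j. col_tensor m n U j) (\<lambda>p a. VV m n U ((N0 n U)(i := \<delta> i)) (zp m p a))) (XH m n x)"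
    unfolding FOd_def F0_def CH_def by (rule pre_FH_last[OF n, symmetric])
  also have "\<dots> = Hsum m n U (\<lambda>j. col_tensor m n U j) (Lsum m n U ((N0 n U)(i := \<delta> i))) x"
  proof -
    have "Lsum m n U ((N0 n U)(i := \<delta> i)) = (\<lambda>p a. VV m n U ((N0 n U)(i := \<delta> i)) (zp m p a))"
      by (intro ext) (rule Lsum_VV)
    then show ?thesis by (simp only: CH_Hsum)
  qed
  finally show ?thesis .
qed


lemma rem_pt:
  assumes e: "0 \<le> e" "e \<le> 1"
    and dD: "\<forall>j<n - 1. cshape_norm m n U j (\<Delta> j) \<le> e * cshape_norm m n U j (col_tensor m n U j)"
    and dd: "\<forall>i<m. nshape_norm m n U i (n - 1) (\<delta> i) \<le> e * nshape_norm m n U i (n - 1) (N0 n U i)"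
    and x: "x \<in> physIdx m n U"
  shows "\<bar>pert_contraction m n U \<Delta> \<delta> x - contraction m n U x - (\<Sum>k<n - 1. FOk m n U \<Delta> k x) - (\<Sum>i<m. FOd m n U \<delta> i x)\<bar>
     \<le> KR m n U * e\<^sup>2"
proof -
  define a where "a h j = col_tensor m n U j (xcol m x j) (lcol m h j) (rcol m n h j)" for h j
  define d where "d h j = \<Delta> j (xcol m x j) (lcol m h j) (rcol m n h j)" for h j
  define p where "p = xcol m x (n - 1)"
  define c where "c h = lcol m h (n - 1)" for h
  define nn where "nn h v i = N0 n U i (p i) (c h i) 0 (cu v i) (cd m v i)" for h v i
  define dl where "dl h v i = \<delta> i (p i) (c h i) 0 (cu v i) (cd m v i)" for h v i
  define cA where "cA j = cshape_norm m n U j (col_tensor m n U j)" for j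
  define cN where "cN i = nshape_norm m n U i (n - 1) (N0 n U i)" for i
  define Cp where "Cp = (\<Prod>j<n - 1. cA j)"
  define Cv where "Cv = (\<Prod>i<m. cN i)"
  define NH where "NH = real (n - 1)"
  define NV where "NV = real (card (vbonds_col m U (n - 1)))"
  define VB where "VB = vbonds_col m U (n - 1)"
  let ?P = "\<lambda>h. \<Prod>j<n - 1. a h j + d h j"
  let ?Q = "\<lambda>h. \<Prod>j<n - 1. a h j"
  let ?S = "\<lambda>h. FO1 {..<n - 1} (a h) (d h)"
  let ?Ld = "\<lambda>h. \<Sum>v\<in>VB. \<Prod>i<m. nn h v i + dl h v i"
  let ?L0 = "\<lambda>h. \<Sum>v\<in>VB. \<Prod>i<m. nn h v i"
  let ?V = "\<lambda>h. \<Sum>v\<in>VB. FO1 {..<m} (nn h v) (dl h v)"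
  have pert: "pert_contraction m n U \<Delta> \<delta> x = (\<Sum>h\<in>hbonds m n U. ?P h * ?Ld h)"
    unfolding pert_Hsum Hsum_def Lsum_def a_def d_def nn_def dl_def p_def c_def VB_def by simp
  have contr: "contraction m n U x = (\<Sum>h\<in>hbonds m n U. ?Q h * ?L0 h)"
    unfolding contr_Hsum Hsum_def L0_Lsum Lsum_def a_def nn_def p_def c_def VB_def by simp
  have FOk: "(\<Sum>k<n - 1. FOk m n U \<Delta> k x) = (\<Sum>h\<in>hbonds m n U. ?S h * ?L0 h)"
  proof -
    have "(\<Sum>k<n - 1. FOk m n U \<Delta> k x) = (\<Sum>k<n - 1. \<Sum>h\<in>hbonds m n U. (\<Prod>j<n - 1. ((a h)(k := d h k)) j) * ?L0 h)"
    proof (intro sum.cong refl)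
      fix k assume "k \<in> {..<n - 1}"
      then have k: "k < n - 1" by simp
      show "FOk m n U \<Delta> k x = (\<Sum>h\<in>hbonds m n U. (\<Prod>j<n - 1. ((a h)(k := d h k)) j) * ?L0 h)"
        unfolding FOk_Hsum[OF k] Hsum_def L0_Lsum Lsum_def
        by (intro sum.cong refl arg_cong2[where f="(*)"] prod.cong) (auto simp: a_def d_def nn_def p_def c_def VB_def)
    qed
    also have "\<dots> = (\<Sum>h\<in>hbonds m n U. (\<Sum>k<n - 1. \<Prod>j<n - 1. ((a h)(k := d h k)) j) * ?L0 h)"
      by (subst sum.swap) (simp add: sum_distrib_right)
    also have "\<dots> = (\<Sum>h\<in>hbonds m n U. ?S h * ?L0 h)"
      unfolding FO1_def by (intro sum.cong refl arg_cong2[where f="(*)"] prod_upd_remove) auto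
    finally show ?thesis .
  qed
  have FOd: "(\<Sum>i<m. FOd m n U \<delta> i x) = (\<Sum>h\<in>hbonds m n U. ?Q h * ?V h)"
  proof -
    have "(\<Sum>i<m. FOd m n U \<delta> i x) = (\<Sum>i<m. \<Sum>h\<in>hbonds m n U. ?Q h * (\<Sum>v\<in>VB. \<Prod>i'<m. ((nn h v)(i := dl h v i)) i'))"
    proof (intro sum.cong refl)
      fix i assume "i \<in> {..<m}"
      show "FOd m n U \<delta> i x = (\<Sum>h\<in>hbonds m n U. ?Q h * (\<Sum>v\<in>VB. \<Prod>i'<m. ((nn h v)(i := dl h v i)) i'))"
        unfolding FOd_Hsum Hsum_def Lsum_def
        by (intro sum.cong refl arg_cong2[where f="(*)"] prod.cong) (auto simp: a_def nn_def dl_def p_def c_def VB_def)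
    qed
    also have "\<dots> = (\<Sum>h\<in>hbonds m n U. ?Q h * (\<Sum>i<m. \<Sum>v\<in>VB. \<Prod>i'<m. ((nn h v)(i := dl h v i)) i'))"
      by (subst sum.swap) (simp add: sum_distrib_left)
    also have "\<dots> = (\<Sum>h\<in>hbonds m n U. ?Q h * ?V h)"
      unfolding FO1_def
      by (intro sum.cong refl arg_cong2[where f="(*)"]) (subst sum.swap, intro sum.cong refl prod_upd_remove, auto)
    finally show ?thesis .
  qed
  have combine: "pert_contraction m n U \<Delta> \<delta> x - contraction m n U x - (\<Sum>k<n - 1. FOk m n U \<Delta> k x) - (\<Sum>i<m. FOd m n U \<delta> i x)
     = (\<Sum>h\<in>hbonds m n U. ?P h * ?Ld h - ?Q h * ?L0 h - ?S h * ?L0 h - ?Q h * ?V h)"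
    unfolding pert contr FOk FOd by (simp add: sum_subtractf)
  have cA0: "0 \<le> cA j" for j by (simp add: cA_def cshape_nonneg)
  have cN0: "0 \<le> cN i" for i by (simp add: cN_def nshape_nonneg)
  have Cp0: "0 \<le> Cp" unfolding Cp_def by (intro prod_nonneg) (simp add: cA0)
  have Cv0: "0 \<le> Cv" unfolding Cv_def by (intro prod_nonneg) (simp add: cN0)
  have "\<bar>\<Sum>h\<in>hbonds m n U. ?P h * ?Ld h - ?Q h * ?L0 h - ?S h * ?L0 h - ?Q h * ?V h\<bar>
     \<le> real (card (hbonds m n U)) * ((NH\<^sup>2 * 2 ^ (n - 1) * Cp) * (NV * 2 ^ m * Cv) + (NH * Cp) * (NV * Cv * (real m + real m ^ 2 * 2 ^ m))
        + Cp * (NV * real m ^ 2 * 2 ^ m * Cv)) * e\<^sup>2"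
    unfolding mult.assoc[of "real (card (hbonds m n U))"]
  proof (rule sum_abs_bound)
    fix h assume h: "h \<in> hbonds m n U"
    have ab: "\<bar>a h j\<bar> \<le> cA j" "\<bar>d h j\<bar> \<le> e * cA j" if j: "j \<in> {..<n - 1}" for j
    proof -
      have j': "j < n" "j < n - 1" using j by auto
      have idx: "xcol m x j \<in> physC m U j" "lcol m h j \<in> leftC m U j" "rcol m n h j \<in> rightC m n U j"
        using xcol_in[OF x j'(1)] lcol_in[OF h j'(1)] rcol_in[OF h j'(1)] by auto
      show "\<bar>a h j\<bar> \<le> cA j" unfolding a_def cA_def using idx by (rule cshape_entry)
      have "\<bar>d h j\<bar> \<le> cshape_norm m n U j (\<Delta> j)" unfolding d_def using idx by (rule cshape_entry)
      then show "\<bar>d h j\<bar> \<le> e * cA j" using dD j'(2) unfolding cA_def by (meson order_trans)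
    qed
    have nb: "\<bar>nn h v i\<bar> \<le> cN i" "\<bar>dl h v i\<bar> \<le> e * cN i" if v: "v \<in> VB" and i: "i < m" for v i
    proof -
      have v': "v \<in> vbonds_col m U (n - 1)" using v by (simp add: VB_def)
      have idx: "p i < phys U i (n - 1)" "c h i < ldim U i (n - 1)" "0 < rdim n U i (n - 1)"
        "cu v i < udim U i (n - 1)" "cd m v i < ddim m U i (n - 1)"
        using x_lt[OF x i] lidx_lt[OF h i] rdim_last[OF n] cu_lt[OF v' i] cd_lt[OF v' i] n i
        by (auto simp: p_def c_def xcol_def lcol_def)
      show "\<bar>nn h v i\<bar> \<le> cN i" unfolding nn_def cN_def using idx by (rule nshape_entry)
      have "\<bar>dl h v i\<bar> \<le> nshape_norm m n U i (n - 1) (\<delta> i)" unfolding dl_def using idx by (rule nshape_entry)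
      then show "\<bar>dl h v i\<bar> \<le> e * cN i" using dd i unfolding cN_def by (meson order_trans)
    qed
    have pw: "(1 + e) ^ (n - 1) \<le> 2 ^ (n - 1)" by (rule power_mono) (use e in auto)
    have B1: "\<bar>?P h - ?Q h - ?S h\<bar> \<le> (NH\<^sup>2 * 2 ^ (n - 1) * Cp) * e\<^sup>2"
    proof -
      have "\<bar>?P h - ?Q h - ?S h\<bar> \<le> real (card {..<n - 1})^2 * e^2 * ((1 + e) ^ card {..<n - 1} * Cp)"
        unfolding Cp_def by (rule rem_bound) (use ab e in auto)
      also have "\<dots> \<le> NH\<^sup>2 * e^2 * (2 ^ (n - 1) * Cp)"
        using pw Cp0 by (simp add: NH_def mult_left_mono mult_right_mono)
      finally show ?thesis by (simp add: mult_ac)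
    qed
    have B3: "\<bar>?S h\<bar> \<le> (NH * Cp) * e"
    proof -
      have "\<bar>?S h\<bar> \<le> real (card {..<n - 1}) * e * Cp" unfolding Cp_def by (rule FO1_bound) (use ab e in auto)
      then show ?thesis by (simp add: NH_def mult_ac)
    qed
    have B5: "\<bar>?Q h\<bar> \<le> Cp" unfolding Cp_def by (rule prod_abs_le) (use ab in auto)
    have B2: "\<bar>?Ld h\<bar> \<le> NV * 2 ^ m * Cv"
    proof -
      have "\<bar>?Ld h\<bar> \<le> real (card VB) * (2 ^ m * Cv)"
        by (rule sum_abs_bound) (auto simp: VB_def Cv_def intro!: vert_bounds(1)[OF _ _ e] nb)
      then show ?thesis by (simp add: NV_def VB_def mult_ac)
    qed
    have B4: "\<bar>?Ld h - ?L0 h\<bar> \<le> (NV * Cv * (real m + real m ^ 2 * 2 ^ m)) * e"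
    proof -
      have "\<bar>?Ld h - ?L0 h\<bar> = \<bar>\<Sum>v\<in>VB. (\<Prod>i<m. nn h v i + dl h v i) - (\<Prod>i<m. nn h v i)\<bar>"
        by (simp add: sum_subtractf)
      also have "\<dots> \<le> real (card VB) * ((real m + real m ^ 2 * 2 ^ m) * Cv * e)"
        by (rule sum_abs_bound) (auto simp: VB_def Cv_def intro!: vert_bounds(2)[OF _ _ e] nb)
      finally show ?thesis by (simp add: NV_def VB_def mult_ac)
    qed
    have B6: "\<bar>?Ld h - ?L0 h - ?V h\<bar> \<le> (NV * real m ^ 2 * 2 ^ m * Cv) * e\<^sup>2"
    proof -
      have "\<bar>?Ld h - ?L0 h - ?V h\<bar> = \<bar>\<Sum>v\<in>VB. (\<Prod>i<m. nn h v i + dl h v i) - (\<Prod>i<m. nn h v i) - FO1 {..<m} (nn h v) (dl h v)\<bar>"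
        by (simp add: sum_subtractf)
      also have "\<dots> \<le> real (card VB) * (real m ^ 2 * 2 ^ m * Cv * e\<^sup>2)"
        by (rule sum_abs_bound) (auto simp: VB_def Cv_def intro!: vert_bounds(3)[OF _ _ e] nb)
      finally show ?thesis by (simp add: NV_def VB_def mult_ac)
    qed
    show "\<bar>?P h * ?Ld h - ?Q h * ?L0 h - ?S h * ?L0 h - ?Q h * ?V h\<bar>
       \<le> ((NH\<^sup>2 * 2 ^ (n - 1) * Cp) * (NV * 2 ^ m * Cv) + (NH * Cp) * (NV * Cv * (real m + real m ^ 2 * 2 ^ m))
        + Cp * (NV * real m ^ 2 * 2 ^ m * Cv)) * e\<^sup>2"
      by (rule alg_bound[OF B1 B2 B3 B4 B5 B6 e(1)])
  qed simp
  also have "\<dots> = KR m n U * e\<^sup>2"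
    unfolding KR_def Let_def Cp_def Cv_def NH_def NV_def cA_def cN_def by simp
  finally show ?thesis unfolding combine .
qed

end


lemma tensor_norm_L2: "tensor_norm m n U f = L2_set f (physIdx m n U)"
  by (simp add: tensor_norm_def L2_set_def)

lemma L2_set_sum:
  assumes "finite K"
  shows "L2_set (\<lambda>x. \<Sum>k\<in>K. f k x) A \<le> (\<Sum>k\<in>K. L2_set (f k) A)"
  using assms
proof (induction K rule: finite_induct)
  case empty
  then show ?case by (simp add: L2_set_def)
next
  case (insert k K)
  have "L2_set (\<lambda>x. \<Sum>k\<in>insert k K. f k x) A = L2_set (\<lambda>x. f k x + (\<Sum>k\<in>K. f k x)) A"
    using insert by simp
  also have "\<dots> \<le> L2_set (f k) A + L2_set (\<lambda>x. \<Sum>k\<in>K. f k x) A" by (rule L2_set_triangle_ineq)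
  also have "\<dots> \<le> L2_set (f k) A + (\<Sum>k\<in>K. L2_set (f k) A)" using insert by simp
  finally show ?case using insert by simp
qed

lemma sqrt_pow_powr: "m \<noteq> 0 \<Longrightarrow> sqrt (real D ^ m) = real D powr (real m / 2)"
  by (simp add: powr_half_sqrt_powr powr_realpow')

lemma KR_nonneg: "0 \<le> KR m n U"
  unfolding KR_def Let_def
  by (intro mult_nonneg_nonneg add_nonneg_nonneg prod_nonneg cshape_nonneg nshape_nonneg) auto

context
  fixes m n :: nat and U :: peps and D :: nat
  assumes m: "1 \<le> m" and n: "1 \<le> n" and cc: "col_canonical m n U" and lc: "last_canonical m n U"
    and hD: "\<forall>i<m. \<forall>j. j + 1 < n \<longrightarrow> hdim U i j \<le> D"
    and vD: "\<forall>i. i + 1 < m \<longrightarrow> vdim U i (n - 1) \<le> D"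
begin

lemma nrm_eq: "tensor_norm m n U (contraction m n U) = sqrt (nC2 m n U)"
  unfolding tensor_norm_def nC2_def contr_CH[OF m n]
  using XH_sum[where m=m and n=n and U=U and f="\<lambda>X. (CH m n U (F0 m n U) X)\<^sup>2"] by simp

lemma FOk_norm:
  assumes k: "k < n - 1"
  shows "tensor_norm m n U (FOk m n U \<Delta> k) \<le> cshape_norm m n U k (\<Delta> k) * tensor_norm m n U (contraction m n U)"
proof -
  have "tensor_norm m n U (FOk m n U \<Delta> k) = sqrt (\<Sum>X\<in>Pi\<^sub>E {..<n} (physC m U). (CH m n U ((F0 m n U)(k := \<Delta> k)) X)\<^sup>2)"
    unfolding tensor_norm_def FOk_def using XH_sum[where m=m and n=n and U=U and f="\<lambda>X. (CH m n U ((F0 m n U)(k := \<Delta> k)) X)\<^sup>2"] by simp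
  also have "\<dots> \<le> sqrt ((cshape_norm m n U k (\<Delta> k))\<^sup>2 * nC2 m n U)"
    by (rule real_sqrt_le_mono) (rule E1[OF m n cc lc k])
  also have "\<dots> = cshape_norm m n U k (\<Delta> k) * tensor_norm m n U (contraction m n U)"
    by (simp add: real_sqrt_mult nrm_eq cshape_nonneg)
  finally show ?thesis .
qed

lemma FOd_norm:
  assumes i: "i < m"
  shows "tensor_norm m n U (FOd m n U \<delta> i) \<le> nshape_norm m n U i (n - 1) (\<delta> i) * (if i < m - 1 then tensor_norm m n U (contraction m n U) else 1)"
proof -
  have "tensor_norm m n U (FOd m n U \<delta> i) = sqrt (\<Sum>X\<in>Pi\<^sub>E {..<n} (physC m U).
      (CH m n U ((F0 m n U)(n - 1 := (\<lambda>p a b. VV m n U ((N0 n U)(i := \<delta> i)) (zp m p a)))) X)\<^sup>2)"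
    unfolding tensor_norm_def FOd_def
    using XH_sum[where m=m and n=n and U=U and f="\<lambda>X. (CH m n U ((F0 m n U)(n - 1 := (\<lambda>p a b. VV m n U ((N0 n U)(i := \<delta> i)) (zp m p a)))) X)\<^sup>2"] by simp
  also have "\<dots> \<le> sqrt (\<Sum>p\<in>physC m U (n - 1). \<Sum>c\<in>leftC m U (n - 1). (VV m n U ((N0 n U)(i := \<delta> i)) (zp m p c))\<^sup>2)"
    by (rule real_sqrt_le_mono) (rule E_last[OF m n cc lc])
  also have "\<dots> = sqrt (\<Sum>q\<in>Pi\<^sub>E {..<m} (PV n U). (VV m n U ((N0 n U)(i := \<delta> i)) q)\<^sup>2)"
    using zp_sum[where m=m and n=n and U=U and f="\<lambda>q. (VV m n U ((N0 n U)(i := \<delta> i)) q)\<^sup>2"] by simp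
  also have "\<dots> \<le> sqrt ((nshape_norm m n U i (n - 1) (\<delta> i))\<^sup>2 * (if i < m - 1 then nV2 m n U else 1))"
    by (rule real_sqrt_le_mono) (rule EV[OF m n cc lc i])
  also have "\<dots> = nshape_norm m n U i (n - 1) (\<delta> i) * (if i < m - 1 then tensor_norm m n U (contraction m n U) else 1)"
    by (simp add: real_sqrt_mult nrm_eq nC2_nV2[OF m n cc lc] nshape_nonneg)
  finally show ?thesis .
qed

lemma cA_bound:
  assumes k: "k < n - 1"
  shows "cshape_norm m n U k (col_tensor m n U k) \<le> real D powr (real m / 2)"
proof -
  have k1: "Suc k < n" using k by simp
  have "real (card (rightC m n U k)) = (\<Prod>i<m. real (hdim U i k))"
    using k1 unfolding rightC_def by (simp add: card_PiE rdim_def)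
  also have "\<dots> \<le> (\<Prod>i<m. real D)" using hD k by (intro prod_mono) auto
  finally have c: "real (card (rightC m n U k)) \<le> real D ^ m" by simp
  have "cshape_norm m n U k (col_tensor m n U k) = sqrt ((cshape_norm m n U k (col_tensor m n U k))\<^sup>2)"
    by (simp add: cshape_nonneg)
  also have "\<dots> = sqrt (real (card (rightC m n U k)))" by (simp only: cshape_A[OF m n cc lc k])
  also have "\<dots> \<le> sqrt (real D ^ m)" using c by (rule real_sqrt_le_mono)
  finally show ?thesis using m by (simp only: sqrt_pow_powr)
qed

lemma cN_bound:
  assumes i: "i < m - 1"
  shows "nshape_norm m n U i (n - 1) (node U i (n - 1)) \<le> sqrt (real D)"
proof -
  have e: "node U i (n - 1) = N0 n U i" by (simp add: N0_def fun_eq_iff)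
  have "nshape_norm m n U i (n - 1) (node U i (n - 1)) = nshape_norm m n U i (n - 1) (N0 n U i)" by (simp only: e)
  also have "\<dots> = sqrt ((nshape_norm m n U i (n - 1) (N0 n U i))\<^sup>2)"
    by (simp add: nshape_nonneg)
  also have "\<dots> = sqrt (real (vdim U i (n - 1)))" by (simp only: nshape_N[OF m n cc lc i])
  also have "\<dots> \<le> sqrt (real D)" using vD i by simp
  finally show ?thesis .
qed

lemma cN_last: "nshape_norm m n U (m - 1) (n - 1) (node U (m - 1) (n - 1)) = tensor_norm m n U (contraction m n U)"
proof -
  have e: "node U (m - 1) (n - 1) = N0 n U (m - 1)" by (simp add: N0_def fun_eq_iff)
  show ?thesis unfolding nrm_eq nC2_nV2[OF m n cc lc] nV2_last[OF m n cc lc] e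
    by (simp add: nshape_nonneg)
qed

lemma C_bound:
  assumes e1: "0 \<le> e1" "e1 \<le> 1" and e2: "0 \<le> e2" "e2 \<le> 1"
    and p: "is_pert m n U e1 e2 \<Delta> \<delta>" and nz: "tensor_norm m n U (contraction m n U) \<noteq> 0"
  shows "rel_err m n U \<Delta> \<delta> \<le> e1 * (real (n - 1) * real D powr (real m / 2)) + e2 * (real (m - 1) * sqrt (real D) + 1)
     + sqrt (real (card (physIdx m n U))) * KR m n U / tensor_norm m n U (contraction m n U) * (e1\<^sup>2 + e2\<^sup>2)"
proof -
  let ?nr = "tensor_norm m n U (contraction m n U)"
  let ?A = "physIdx m n U"
  define e where "e = max e1 e2"
  have e: "0 \<le> e" "e \<le> 1" "e1 \<le> e" "e2 \<le> e" using e1 e2 by (auto simp: e_def)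
  have "0 \<le> ?nr" by (simp add: tensor_norm_def sum_nonneg)
  then have nr0: "0 < ?nr" using nz by simp
  have dD: "\<forall>j<n - 1. cshape_norm m n U j (\<Delta> j) \<le> e1 * cshape_norm m n U j (col_tensor m n U j)"
    using p unfolding is_pert_def by blast
  have dd0: "\<forall>i<m. nshape_norm m n U i (n - 1) (\<delta> i) \<le> e2 * nshape_norm m n U i (n - 1) (node U i (n - 1))"
    using p unfolding is_pert_def by blast
  have dDe: "\<forall>j<n - 1. cshape_norm m n U j (\<Delta> j) \<le> e * cshape_norm m n U j (col_tensor m n U j)"
    using dD e(3) by (meson cshape_nonneg mult_right_mono order_trans)
  have ddN: "node U i (n - 1) = N0 n U i" for i by (simp add: N0_def fun_eq_iff)
  have dde: "\<forall>i<m. nshape_norm m n U i (n - 1) (\<delta> i) \<le> e * nshape_norm m n U i (n - 1) (N0 n U i)"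
    using dd0 e(4) unfolding ddN by (meson nshape_nonneg mult_right_mono order_trans)
  define R where "R x = pert_contraction m n U \<Delta> \<delta> x - contraction m n U x - (\<Sum>k<n - 1. FOk m n U \<Delta> k x) - (\<Sum>i<m. FOd m n U \<delta> i x)" for x
  have diff: "pert_contraction m n U \<Delta> \<delta> x - contraction m n U x = (\<Sum>k<n - 1. FOk m n U \<Delta> k x) + ((\<Sum>i<m. FOd m n U \<delta> i x) + R x)" for x
    by (simp add: R_def)
  have "tensor_norm m n U (\<lambda>x. pert_contraction m n U \<Delta> \<delta> x - contraction m n U x)
      \<le> L2_set (\<lambda>x. \<Sum>k<n - 1. FOk m n U \<Delta> k x) ?A + (L2_set (\<lambda>x. \<Sum>i<m. FOd m n U \<delta> i x) ?A + L2_set R ?A)"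
  proof -
    have t1: "L2_set (\<lambda>x. (\<Sum>k<n - 1. FOk m n U \<Delta> k x) + ((\<Sum>i<m. FOd m n U \<delta> i x) + R x)) ?A
        \<le> L2_set (\<lambda>x. \<Sum>k<n - 1. FOk m n U \<Delta> k x) ?A + L2_set (\<lambda>x. (\<Sum>i<m. FOd m n U \<delta> i x) + R x) ?A"
      by (rule L2_set_triangle_ineq)
    have t2: "L2_set (\<lambda>x. (\<Sum>i<m. FOd m n U \<delta> i x) + R x) ?A \<le> L2_set (\<lambda>x. \<Sum>i<m. FOd m n U \<delta> i x) ?A + L2_set R ?A"
      by (rule L2_set_triangle_ineq)
    show ?thesis unfolding tensor_norm_L2 diff using t1 t2 by linarith
  qed
  also have "\<dots> \<le> (\<Sum>k<n - 1. L2_set (FOk m n U \<Delta> k) ?A) + ((\<Sum>i<m. L2_set (FOd m n U \<delta> i) ?A) + sqrt (real (card ?A)) * (KR m n U * e\<^sup>2))"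
  proof (intro add_mono L2_set_sum finite_lessThan)
    show "L2_set R ?A \<le> sqrt (real (card ?A)) * (KR m n U * e\<^sup>2)"
      unfolding L2_set_def
    proof (rule L2_bound)
      fix x assume "x \<in> ?A"
      then show "\<bar>R x\<bar> \<le> KR m n U * e\<^sup>2" unfolding R_def by (rule rem_pt[OF m n e(1,2) dDe dde])
    qed simp
  qed
  also have "\<dots> \<le> (\<Sum>k<n - 1. e1 * real D powr (real m / 2) * ?nr) + ((\<Sum>i<m. e2 * (if i < m - 1 then sqrt (real D) else 1) * ?nr) + sqrt (real (card ?A)) * (KR m n U * (e1\<^sup>2 + e2\<^sup>2)))"
  proof (intro add_mono sum_mono)
    fix k assume "k \<in> {..<n - 1}"
    then have k: "k < n - 1" by simp
    have "L2_set (FOk m n U \<Delta> k) ?A \<le> cshape_norm m n U k (\<Delta> k) * ?nr"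
      using FOk_norm[OF k] unfolding tensor_norm_L2 .
    also have "\<dots> \<le> (e1 * cshape_norm m n U k (col_tensor m n U k)) * ?nr"
      using dD k nr0 by (intro mult_right_mono) auto
    also have "\<dots> \<le> (e1 * real D powr (real m / 2)) * ?nr"
      using cA_bound[OF k] e1 nr0 by (intro mult_right_mono mult_left_mono) auto
    finally show "L2_set (FOk m n U \<Delta> k) ?A \<le> e1 * real D powr (real m / 2) * ?nr" .
  next
    fix i assume "i \<in> {..<m}"
    then have i: "i < m" by simp
    have "L2_set (FOd m n U \<delta> i) ?A \<le> nshape_norm m n U i (n - 1) (\<delta> i) * (if i < m - 1 then ?nr else 1)"
      using FOd_norm[OF i] unfolding tensor_norm_L2 .
    also have "\<dots> \<le> (e2 * nshape_norm m n U i (n - 1) (node U i (n - 1))) * (if i < m - 1 then ?nr else 1)"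
      using dd0 i nr0 by (intro mult_right_mono) auto
    also have "\<dots> \<le> e2 * (if i < m - 1 then sqrt (real D) else 1) * ?nr"
    proof (cases "i < m - 1")
      case True
      then show ?thesis using cN_bound[OF True] e2 nr0
        by (simp add: mult.assoc mult_left_mono mult_right_mono)
    next
      case False
      then have "i = m - 1" using i by simp
      then show ?thesis using False cN_last by simp
    qed
    finally show "L2_set (FOd m n U \<delta> i) ?A \<le> e2 * (if i < m - 1 then sqrt (real D) else 1) * ?nr" .
  next
    have "e\<^sup>2 \<le> e1\<^sup>2 + e2\<^sup>2" unfolding e_def using e1 e2 by (simp add: max_def)
    then show "sqrt (real (card ?A)) * (KR m n U * e\<^sup>2) \<le> sqrt (real (card ?A)) * (KR m n U * (e1\<^sup>2 + e2\<^sup>2))"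
      using KR_nonneg by (intro mult_left_mono) auto
  qed
  also have "\<dots> = (e1 * (real (n - 1) * real D powr (real m / 2)) + e2 * (real (m - 1) * sqrt (real D) + 1)) * ?nr
     + sqrt (real (card ?A)) * (KR m n U * (e1\<^sup>2 + e2\<^sup>2))"
  proof -
    have s: "(\<Sum>i<m. (if i < m - 1 then sqrt (real D) else 1)) = real (m - 1) * sqrt (real D) + 1"
    proof -
      have "{..<m} = insert (m - 1) {..<m - 1}" using m by auto
      then show ?thesis by (simp add: sum.insert)
    qed
    have "(\<Sum>i<m. e2 * (if i < m - 1 then sqrt (real D) else 1) * ?nr) = e2 * (\<Sum>i<m. (if i < m - 1 then sqrt (real D) else 1)) * ?nr"
      by (simp add: sum_distrib_left sum_distrib_right mult_ac)
    then show ?thesis unfolding s by (simp add: algebra_simps)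
  qed
  finally have T: "tensor_norm m n U (\<lambda>x. pert_contraction m n U \<Delta> \<delta> x - contraction m n U x) \<le> \<dots>" .
  have "rel_err m n U \<Delta> \<delta> \<le> ((e1 * (real (n - 1) * real D powr (real m / 2)) + e2 * (real (m - 1) * sqrt (real D) + 1)) * ?nr
     + sqrt (real (card ?A)) * (KR m n U * (e1\<^sup>2 + e2\<^sup>2))) / ?nr"
    unfolding rel_err_def using T nr0 by (intro divide_right_mono) auto
  also have "\<dots> = e1 * (real (n - 1) * real D powr (real m / 2)) + e2 * (real (m - 1) * sqrt (real D) + 1)
     + sqrt (real (card ?A)) * KR m n U / ?nr * (e1\<^sup>2 + e2\<^sup>2)"
    using nr0 by (simp add: add_divide_distrib)
  finally show ?thesis .
qed

end


theorem mainTheorem16: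
  fixes m n D :: nat and T C :: peps
  assumes "1 \<le> m" and "1 \<le> n"
    and "tensor_norm m n T (contraction m n T) \<noteq> 0"
    and "\<forall>i<m. \<forall>j<n. phys C i j = phys T i j"
    and "\<forall>x\<in>physIdx m n T. contraction m n C x = contraction m n T x"
    and "col_canonical m n C" and "last_canonical m n C"
    and "\<forall>i<m. \<forall>j. j + 1 < n \<longrightarrow> hdim C i j \<le> D"
    and "\<forall>i. i + 1 < m \<longrightarrow> vdim C i (n - 1) \<le> D"
  shows "\<exists>K e0. 0 < e0 \<and> (\<forall>\<epsilon>1 \<epsilon>2. 0 < \<epsilon>1 \<longrightarrow> 0 < \<epsilon>2 \<longrightarrow> \<epsilon>1 < e0 \<longrightarrow> \<epsilon>2 < e0 \<longrightarrow>
     sup_err m n C \<epsilon>1 \<epsilon>2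
       \<le> (\<epsilon>1 * (1 + real (n - 1) * real D powr (real m / 2)) + \<epsilon>2 * (1 + real (m - 1) * sqrt (real D)))
          / (\<epsilon>1 * real (n - 1) + \<epsilon>2 * real m) * sup_err m n T \<epsilon>1 \<epsilon>2
         + K * (\<epsilon>1\<^sup>2 + \<epsilon>2\<^sup>2))"
proof -
  note m = assms(1) and n = assms(2) and nzT = assms(3) and ph = assms(4) and ceq = assms(5)
    and cc = assms(6) and lc = assms(7) and hD = assms(8) and vD = assms(9)
  have PI: "physIdx m n C = physIdx m n T"
    unfolding physIdx_def using ph by (intro PiE_cong) auto
  have nrm: "tensor_norm m n C (contraction m n C) = tensor_norm m n T (contraction m n T)"
    unfolding tensor_norm_def PI using ceq by (intro arg_cong[where f=sqrt] sum.cong) auto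
  then have nzC: "tensor_norm m n C (contraction m n C) \<noteq> 0" using nzT by simp
  define K where "K = sqrt (real (card (physIdx m n C))) * KR m n C / tensor_norm m n C (contraction m n C)"
  have main: "\<forall>\<epsilon>1 \<epsilon>2. 0 < \<epsilon>1 \<longrightarrow> 0 < \<epsilon>2 \<longrightarrow> \<epsilon>1 < 1 \<longrightarrow> \<epsilon>2 < 1 \<longrightarrow>
     sup_err m n C \<epsilon>1 \<epsilon>2
       \<le> (\<epsilon>1 * (1 + real (n - 1) * real D powr (real m / 2)) + \<epsilon>2 * (1 + real (m - 1) * sqrt (real D)))
          / (\<epsilon>1 * real (n - 1) + \<epsilon>2 * real m) * sup_err m n T \<epsilon>1 \<epsilon>2
         + K * (\<epsilon>1\<^sup>2 + \<epsilon>2\<^sup>2)"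
  proof (intro allI impI)
    fix e1 e2 :: real
    assume e1: "0 < e1" and e2: "0 < e2" and e1' : "e1 < 1" and e2': "e2 < 1"
    define bnd where "bnd = e1 * (real (n - 1) * real D powr (real m / 2)) + e2 * (real (m - 1) * sqrt (real D) + 1) + K * (e1\<^sup>2 + e2\<^sup>2)"
    define num where "num = e1 * (1 + real (n - 1) * real D powr (real m / 2)) + e2 * (1 + real (m - 1) * sqrt (real D))"
    define den where "den = e1 * real (n - 1) + e2 * real m"
    have den0: "0 < den" unfolding den_def using e1 e2 m by (simp add: add_nonneg_pos)
    have num0: "0 \<le> num" unfolding num_def using e1 e2 by (simp add: add_nonneg_nonneg)
    have SC: "sup_err m n C e1 e2 \<le> bnd"
      unfolding sup_err_def
    proof (rule cSup_least)
      show "{rel_err m n C \<Delta> \<delta> |\<Delta> \<delta>. is_pert m n C e1 e2 \<Delta> \<delta>} \<noteq> {}"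
        using is_pert_zero[of e1 e2 m n C] e1 e2 by auto
      fix y assume "y \<in> {rel_err m n C \<Delta> \<delta> |\<Delta> \<delta>. is_pert m n C e1 e2 \<Delta> \<delta>}"
      then obtain \<Delta> \<delta> where y: "y = rel_err m n C \<Delta> \<delta>" and p: "is_pert m n C e1 e2 \<Delta> \<delta>" by blast
      show "y \<le> bnd" unfolding y bnd_def K_def
        using C_bound[OF m n cc lc hD vD _ _ _ _ p nzC] e1 e2 e1' e2' by simp
    qed
    have ST: "den \<le> sup_err m n T e1 e2"
      unfolding sup_err_def
    proof (rule cSup_upper2)
      let ?D = "\<lambda>j. \<lambda>p a b. e1 * col_tensor m n T j p a b"
      let ?d = "\<lambda>i. \<lambda>p l r u d. e2 * node T i (n - 1) p l r u d"
      have pT: "is_pert m n T e1 e2 ?D ?d"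
        unfolding is_pert_def using e1 e2 by (simp add: cshape_scale nshape_scale)
      show "rel_err m n T ?D ?d \<in> {rel_err m n T \<Delta> \<delta> |\<Delta> \<delta>. is_pert m n T e1 e2 \<Delta> \<delta>}"
        using pT by blast
      have rs: "rel_err m n T ?D ?d = (1 + e1) ^ (n - 1) * (1 + e2) ^ m - 1"
        by (rule rel_err_scaled[OF n nzT]) (use e1 e2 in auto)
      show "den \<le> rel_err m n T ?D ?d"
        unfolding rs den_def using kappa_ge[of e1 e2 n m] e1 e2 by (simp add: mult.commute)
      show "bdd_above {rel_err m n T \<Delta> \<delta> |\<Delta> \<delta>. is_pert m n T e1 e2 \<Delta> \<delta>}"
      proof (rule bdd_aboveI)
        fix y assume "y \<in> {rel_err m n T \<Delta> \<delta> |\<Delta> \<delta>. is_pert m n T e1 e2 \<Delta> \<delta>}"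
        then obtain \<Delta> \<delta> where y: "y = rel_err m n T \<Delta> \<delta>" and p: "is_pert m n T e1 e2 \<Delta> \<delta>" by blast
        show "y \<le> sqrt (real (card (physIdx m n T))) * (2 * MU m n T) / tensor_norm m n T (contraction m n T)"
          unfolding y using rel_err_bdd[OF n _ _ _ _ p] e1 e2 e1' e2' by simp
      qed
    qed
    have "num \<le> num / den * sup_err m n T e1 e2"
    proof -
      have "num = num / den * den" using den0 by simp
      also have "\<dots> \<le> num / den * sup_err m n T e1 e2"
        using ST num0 den0 by (intro mult_left_mono) auto
      finally show ?thesis .
    qed
    moreover have "bnd \<le> num + K * (e1\<^sup>2 + e2\<^sup>2)"
      unfolding bnd_def num_def using e1 by (simp add: algebra_simps)
    ultimately show "sup_err m n C e1 e2
       \<le> (e1 * (1 + real (n - 1) * real D powr (real m / 2)) + e2 * (1 + real (m - 1) * sqrt (real D)))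
          / (e1 * real (n - 1) + e2 * real m) * sup_err m n T e1 e2 + K * (e1\<^sup>2 + e2\<^sup>2)"
      using SC unfolding num_def den_def by linarith
  qed
  show ?thesis
    by (rule exI[of _ K], rule exI[of _ "1::real"], rule conjI[OF zero_less_one main])
qed


end
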